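(* Let $F=\breve F(\alpha_1,\dots,\alpha_t)$ be a fence. Every statistic in \[ \operatorname{Span}_{\mathbb R}\Big(\bigcup_{i=1}^t\bigcup_{j=1}^{\beta_i}\{\alpha_i\hat\chi_{(i,j)}-j\hat\chi_p-(\alpha_i-j)\hat\chi_v : p\text{ the peak of }S_i,\ v\text{ the valley of }S_i\}\Big) \] is homomesic under promotion $\mathrm{Pro}=\tau_{x_n}\circ\cdots\circ\tau_{x_1}$ acting on $\mathcal J(F)$.
   Context: Fences: let $\alpha=(\alpha_1,\dots,\alpha_t)$ be positive integers with $t\ge2$ and $\alpha_1,\alpha_t\ge2$. Put $a_0=0$, $a_i=\alpha_1+\dots+\alpha_i$, $n=a_t-1$. The fence $\breve F(\alpha)$ is the poset on $\{x_1,\dots,x_n\}$ whose cover relations are: for $1\le j\le n-1$ with $a_{i-1}\le j<a_i$, $x_j\lessdot x_{j+1}$ if $i$ is odd and $x_j\gtrdot x_{j+1}$ if $i$ is even. Segments: $S_1=\{x_j:1\le j\le a_1\}$, $S_i=\{x_j:a_{i-1}\le j\le a_i\}$ for $2\le i\le t-1$, $S_t=\{x_j:a_{t-1}\le j\le n\}$. Shared elements $x_{a_i}$ ($i\in[t-1]$) are peaks (cover two elements) for $i$ odd and valleys (covered by two elements) for $i$ even; the peak (valley) of $S_i$ is the shared element of $S_i$ that is a peak (valley), and the corresponding $\hat\chi$ is identically zero if none exists. $\breve S_i$ is the set of non-shared elements of $S_i$, $\beta_i=\alpha_i-1$, $s_{(i,j)}$ the $j$-th smallest element of $\breve S_i$,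 $\hat\chi_{(i,j)}=\hat\chi_{s_{(i,j)}}$, where $\hat\chi_q(I)=1$ if $q\in I$ and $0$ otherwise for order ideals $I\in\mathcal J(F)$. The toggle $\tau_q:\mathcal J(F)\to\mathcal J(F)$ adds $q$ to $I$ if $q\in\min(F\setminus I)$, removes $q$ if $q\in\max(I)$, and fixes $I$ otherwise; composition is applied right to left. A statistic is homomesic under a bijection if its average over every orbit is the same constant. *)

theory Defs
  imports Complex_Main
begin

(* A composition alpha = (alpha_1,...,alpha_t) is a list; alpha_i = alpha ! (i-1).
   The element x_j of the fence is represented by the natural number j, 1 <= j <= n. *)

definition fa :: "nat list \<Rightarrow> nat \<Rightarrow> nat" where
  "fa \<alpha> i = sum_list (take i \<alpha>)"

definition fn :: "nat list \<Rightarrow> nat" where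
  "fn \<alpha> = fa \<alpha> (length \<alpha>) - 1"

definition elems :: "nat list \<Rightarrow> nat set" where
  "elems \<alpha> = {1..fn \<alpha>}"

definition inblock :: "nat list \<Rightarrow> nat \<Rightarrow> nat \<Rightarrow> bool" where
  "inblock \<alpha> i j \<longleftrightarrow> 1 \<le> i \<and> i \<le> length \<alpha> \<and> fa \<alpha> (i - 1) \<le> j \<and> j < fa \<alpha> i"

(* cover relations: (c, d) \<in> covrel means x_c is covered by x_d *)
definition covrel :: "nat list \<Rightarrow> (nat \<times> nat) set" where
  "covrel \<alpha> =
     {(j, j + 1) | j. 1 \<le> j \<and> j \<le> fn \<alpha> - 1 \<and> (\<exists>i. inblock \<alpha> i j \<and> odd i)} \<union>
     {(j + 1, j) | j. 1 \<le> j \<and> j \<le> fn \<alpha> - 1 \<and> (\<exists>i. inblock \<alpha> i j \<and> even i)}"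

definition fle :: "nat list \<Rightarrow> nat \<Rightarrow> nat \<Rightarrow> bool" where
  "fle \<alpha> x y \<longleftrightarrow> (x, y) \<in> (covrel \<alpha>)\<^sup>*"

definition fless :: "nat list \<Rightarrow> nat \<Rightarrow> nat \<Rightarrow> bool" where
  "fless \<alpha> x y \<longleftrightarrow> fle \<alpha> x y \<and> x \<noteq> y"

definition ideals :: "nat list \<Rightarrow> nat set set" where
  "ideals \<alpha> = {I. I \<subseteq> elems \<alpha> \<and> (\<forall>x\<in>I. \<forall>y. fle \<alpha> y x \<longrightarrow> y \<in> I)}"

definition toggle :: "nat list \<Rightarrow> nat \<Rightarrow> nat set \<Rightarrow> nat set" where
  "toggle \<alpha> q I =
     (if q \<in> I \<and> (\<forall>r\<in>I. \<not> fless \<alpha> q r) then I - {q}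
      else if q \<in> elems \<alpha> - I \<and> (\<forall>r\<in>elems \<alpha> - I. \<not> fless \<alpha> r q) then insert q I
      else I)"

(* promotion Pro = tau_{x_n} o ... o tau_{x_1}  (tau_{x_1} applied first) *)
definition pro :: "nat list \<Rightarrow> nat set \<Rightarrow> nat set" where
  "pro \<alpha> I = fold (toggle \<alpha>) [1..<fn \<alpha> + 1] I"

definition orbit :: "('a \<Rightarrow> 'a) \<Rightarrow> 'a \<Rightarrow> 'a set" where
  "orbit \<phi> x = {(\<phi> ^^ k) x | k. True}"

definition homomesic :: "'a set \<Rightarrow> ('a \<Rightarrow> 'a) \<Rightarrow> ('a \<Rightarrow> real) \<Rightarrow> bool" where
  "homomesic S \<phi> f \<longleftrightarrow>
     (\<exists>c. \<forall>x\<in>S. (\<Sum>y\<in>orbit \<phi> x. f y) / real (card (orbit \<phi> x)) = c)"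

definition seg :: "nat list \<Rightarrow> nat \<Rightarrow> nat set" where
  "seg \<alpha> i =
     (if i = 1 then {1..fa \<alpha> 1}
      else if i = length \<alpha> then {fa \<alpha> (i - 1)..fn \<alpha>}
      else {fa \<alpha> (i - 1)..fa \<alpha> i})"

definition shared :: "nat list \<Rightarrow> nat set" where
  "shared \<alpha> = {fa \<alpha> i | i. 1 \<le> i \<and> i \<le> length \<alpha> - 1}"

definition bseg :: "nat list \<Rightarrow> nat \<Rightarrow> nat set" where
  "bseg \<alpha> i = seg \<alpha> i - shared \<alpha>"

definition sij :: "nat list \<Rightarrow> nat \<Rightarrow> nat \<Rightarrow> nat" where
  "sij \<alpha> i j = (THE s. s \<in> bseg \<alpha> i \<and> card {r \<in> bseg \<alpha> i. fless \<alpha> r s} = j - 1)"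

definition chi :: "nat \<Rightarrow> nat set \<Rightarrow> real" where
  "chi q I = (if q \<in> I then 1 else 0)"

definition is_peak :: "nat list \<Rightarrow> nat \<Rightarrow> bool" where
  "is_peak \<alpha> q \<longleftrightarrow> card {c. (c, q) \<in> covrel \<alpha>} = 2"

definition is_valley :: "nat list \<Rightarrow> nat \<Rightarrow> bool" where
  "is_valley \<alpha> q \<longleftrightarrow> card {d. (q, d) \<in> covrel \<alpha>} = 2"

definition chi_peak :: "nat list \<Rightarrow> nat \<Rightarrow> nat set \<Rightarrow> real" where
  "chi_peak \<alpha> i I =
     (if \<exists>p. p \<in> seg \<alpha> i \<inter> shared \<alpha> \<and> is_peak \<alpha> p
      then chi (THE p. p \<in> seg \<alpha> i \<inter> shared \<alpha> \<and> is_peak \<alpha> p) I else 0)"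

definition chi_valley :: "nat list \<Rightarrow> nat \<Rightarrow> nat set \<Rightarrow> real" where
  "chi_valley \<alpha> i I =
     (if \<exists>v. v \<in> seg \<alpha> i \<inter> shared \<alpha> \<and> is_valley \<alpha> v
      then chi (THE v. v \<in> seg \<alpha> i \<inter> shared \<alpha> \<and> is_valley \<alpha> v) I else 0)"

definition gen :: "nat list \<Rightarrow> nat \<Rightarrow> nat \<Rightarrow> nat set \<Rightarrow> real" where
  "gen \<alpha> i j I = real (\<alpha> ! (i - 1)) * chi (sij \<alpha> i j) I - real j * chi_peak \<alpha> i I
                  - (real (\<alpha> ! (i - 1)) - real j) * chi_valley \<alpha> i I"

end

theory Submission
  imports Defs
begin


definition G1 :: "nat \<Rightarrow> nat \<Rightarrow> nat \<Rightarrow> real" where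
  "G1 A j H = (if j \<le> H then real A else 0) - (if H = A then real j else 0)"
definition h1 :: "nat \<Rightarrow> nat \<Rightarrow> nat \<Rightarrow> real" where
  "h1 A j H = (if H = A then 0 else if H < j then (real H + 1) * (real A - real j)
     else (real A - real H - 1) * real j)"
definition G2 :: "nat \<Rightarrow> nat \<Rightarrow> nat \<Rightarrow> real" where
  "G2 A j H = (if j + 1 \<le> H then real A else 0) - (if H = A + 1 then real j else 0)
     - (if 1 \<le> H then real A - real j else 0)"
definition h2 :: "nat \<Rightarrow> nat \<Rightarrow> nat \<Rightarrow> real" where
  "h2 A j H = (if H \<le> j then real H * (real A - real j) else if H \<le> A then (real A - real H) * real j else 0)"
definition G3 :: "nat \<Rightarrow> nat \<Rightarrow> nat \<Rightarrow> real" where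
  "G3 A j H = (if j + 1 \<le> H then real A else 0) - (if 1 \<le> H then real A - real j else 0)"
definition h4 :: "nat \<Rightarrow> nat \<Rightarrow> nat \<Rightarrow> real" where
  "h4 A j H = (if H = 0 then 0 else if H \<le> j + 1 then - (real H - 1) * (real A - real j)
     else real j * (real H - 1 - real A))"
definition h5 :: "nat \<Rightarrow> nat \<Rightarrow> nat \<Rightarrow> real" where
  "h5 A j H = (if H \<le> j then - real H * (real A - real j) else real j * (real H - real A))"

context
  fixes A j :: nat
  assumes j: "1 \<le> j" "j + 1 \<le> A"
begin

lemma k1_step: "1 \<le> H \<Longrightarrow> H \<le> A \<Longrightarrow> G1 A j H - (real A - real j) = h1 A j (H - 1) - h1 A j H"
  using j by (cases "H < j"; cases "H = j"; cases "H = A") (auto simp: G1_def h1_def of_nat_diff algebra_simps)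

lemma k1_wrap: "H' = A - 1 \<or> H' = A \<Longrightarrow> G1 A j 0 - (real A - real j) = h1 A j H' - h1 A j 0"
  using j by (auto simp: G1_def h1_def of_nat_diff algebra_simps)

lemma k2_step: "1 \<le> H \<Longrightarrow> H \<le> A + 1 \<Longrightarrow> G2 A j H = h2 A j (H - 1) - h2 A j H"
  using j by (cases "H \<le> j"; cases "H = j + 1"; cases "H = A + 1") (auto simp: G2_def h2_def of_nat_diff algebra_simps)

lemma k2_wrap: "H = 0 \<or> H = 1 \<Longrightarrow> H' = A \<or> H' = A + 1 \<Longrightarrow> G2 A j H = h2 A j H' - h2 A j H"
  using j by (auto simp: G2_def h2_def of_nat_diff algebra_simps)

lemma k3_step: "1 \<le> H \<Longrightarrow> H \<le> A \<Longrightarrow> G3 A j H = h2 A j (H - 1) - h2 A j H"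
  using j by (cases "H \<le> j"; cases "H = j + 1") (auto simp: G3_def h2_def of_nat_diff algebra_simps)

lemma k3_wrap: "H = 0 \<or> H = 1 \<Longrightarrow> G3 A j H = h2 A j A - h2 A j H"
  using j by (auto simp: G3_def h2_def of_nat_diff algebra_simps)

lemma k4_step: "H \<le> A \<Longrightarrow> G2 A j H = h4 A j (H + 1) - h4 A j H"
  using j by (cases "H = 0"; cases "H \<le> j"; cases "H = j + 1") (auto simp: G2_def h4_def of_nat_diff algebra_simps)

lemma k4_wrap: "H = A \<or> H = A + 1 \<Longrightarrow> H' = 0 \<or> H' = 1 \<Longrightarrow> G2 A j H = h4 A j H' - h4 A j H"
  using j by (auto simp: G2_def h4_def of_nat_diff algebra_simps)

lemma k5_step: "H + 1 \<le> A \<Longrightarrow> G1 A j H - (real A - real j) = h5 A j (H + 1) - h5 A j H"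
  using j by (cases "H < j"; cases "H = j") (auto simp: G1_def h5_def of_nat_diff algebra_simps)

lemma k5_wrap: "H = A - 1 \<or> H = A \<Longrightarrow> G1 A j H - (real A - real j) = h5 A j 0 - h5 A j H"
  using j by (auto simp: G1_def h5_def of_nat_diff algebra_simps)

end


locale fence =
  fixes \<alpha> :: "nat list"
  assumes len2: "length \<alpha> \<ge> 2"
    and pos: "\<forall>x\<in>set \<alpha>. x > 0"
    and hd2: "hd \<alpha> \<ge> 2" and last2: "last \<alpha> \<ge> 2"
begin

abbreviation "N \<equiv> fn \<alpha>"
abbreviation "T \<equiv> length \<alpha>"

definition up :: "nat \<Rightarrow> bool" where
  "up j \<longleftrightarrow> (\<exists>i. inblock \<alpha> i j \<and> odd i)"

lemma fa0[simp]: "fa \<alpha> 0 = 0" by (simp add: fa_def)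

lemma fa_Suc: "i < T \<Longrightarrow> fa \<alpha> (Suc i) = fa \<alpha> i + \<alpha> ! i"
  by (simp add: fa_def take_Suc_conv_app_nth)

lemma nth_pos: "i < T \<Longrightarrow> \<alpha> ! i > 0"
  using pos nth_mem by blast

lemma fa_mono_Suc: "i < T \<Longrightarrow> fa \<alpha> i < fa \<alpha> (Suc i)"
  using fa_Suc nth_pos by simp

lemma fa_strict: "i < k \<Longrightarrow> k \<le> T \<Longrightarrow> fa \<alpha> i < fa \<alpha> k"
proof (induction k)
  case 0 then show ?case by simp
next
  case (Suc k)
  then show ?case using fa_mono_Suc[of k] by (cases "i = k") auto
qed

lemma fa_mono: "i \<le> k \<Longrightarrow> k \<le> T \<Longrightarrow> fa \<alpha> i \<le> fa \<alpha> k"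
  using fa_strict by (cases "i = k") (auto intro: less_imp_le)

lemma ne: "\<alpha> \<noteq> []" using len2 by auto

lemma fa1: "fa \<alpha> 1 = \<alpha> ! 0"
  using fa_Suc[of 0] ne by simp

lemma alpha0: "\<alpha> ! 0 \<ge> 2"
  using hd2 ne by (simp add: hd_conv_nth)

lemma alphaT: "\<alpha> ! (T - 1) \<ge> 2"
  using last2 ne by (simp add: last_conv_nth)

lemma faT: "fa \<alpha> T = fa \<alpha> (T - 1) + \<alpha> ! (T - 1)"
proof -
  have h: "Suc (T - Suc 0) = T" "T - Suc 0 < T" using len2 by auto
  show ?thesis using fa_Suc[of "T - 1"] h by simp
qed

lemma N_eq: "N = fa \<alpha> T - 1"
  by (simp add: fn_def)

lemma N_ge: "N \<ge> fa \<alpha> (T - 1) + 1"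
  using faT alphaT N_eq by arith

lemma fa_ge2: "1 \<le> k \<Longrightarrow> k \<le> T \<Longrightarrow> fa \<alpha> k \<ge> 2"
  using fa_mono[of 1 k] fa1 alpha0 by simp

lemma shared_range: "1 \<le> k \<Longrightarrow> k \<le> T - 1 \<Longrightarrow> 2 \<le> fa \<alpha> k \<and> fa \<alpha> k + 1 \<le> N"
  using fa_ge2[of k] fa_mono[of k "T - 1"] N_ge len2 by auto

lemma block_ex: "j < fa \<alpha> T \<Longrightarrow> \<exists>i. inblock \<alpha> i j"
proof -
  assume j: "j < fa \<alpha> T"
  define i where "i = (LEAST i. j < fa \<alpha> i)"
  have ji: "j < fa \<alpha> i" unfolding i_def by (rule LeastI[of _ T]) (rule j)
  have iT: "i \<le> T" unfolding i_def by (rule Least_le) (rule j)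
  have i0: "i \<noteq> 0"
  proof
    assume "i = 0" then show False using ji by simp
  qed
  have "\<not> j < fa \<alpha> (i - 1)"
    using not_less_Least[of "i - 1" "\<lambda>i. j < fa \<alpha> i"] i0 unfolding i_def by auto
  then show ?thesis using ji iT i0 unfolding inblock_def
    by (intro exI[of _ i]) auto
qed

lemma block_uniq: "inblock \<alpha> i j \<Longrightarrow> inblock \<alpha> i' j \<Longrightarrow> i = i'"
proof (rule ccontr)
  assume a: "inblock \<alpha> i j" "inblock \<alpha> i' j" "i \<noteq> i'"
  have aux: "\<And>i i'. inblock \<alpha> i j \<Longrightarrow> inblock \<alpha> i' j \<Longrightarrow> i < i' \<Longrightarrow> False"
  proof -
    fix i i' assume b: "inblock \<alpha> i j" "inblock \<alpha> i' j" "i < i'"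
    have "fa \<alpha> i \<le> fa \<alpha> (i' - 1)" using b by (intro fa_mono) (auto simp: inblock_def)
    then show False using b by (auto simp: inblock_def)
  qed
  show False using aux[of i i'] aux[of i' i] a by linarith
qed

lemma up_blk: "inblock \<alpha> i j \<Longrightarrow> up j \<longleftrightarrow> odd i"
  unfolding up_def using block_uniq by blast

lemma not_up_blk: "1 \<le> j \<Longrightarrow> j < N \<Longrightarrow> (\<exists>i. inblock \<alpha> i j \<and> even i) \<longleftrightarrow> \<not> up j"
proof -
  assume "1 \<le> j" "j < N"
  then have "j < fa \<alpha> T" using N_eq by simp
  then obtain i where "inblock \<alpha> i j" using block_ex by blast
  then show ?thesis using up_blk block_uniq by blast
qed

lemma covrel_iff: "(c, d) \<in> covrel \<alpha> \<longleftrightarrow>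
   (1 \<le> c \<and> c < N \<and> d = c + 1 \<and> up c) \<or> (1 \<le> d \<and> d < N \<and> c = d + 1 \<and> \<not> up d)"
proof -
  have N1: "N \<ge> 1" using N_ge by simp
  have e: "\<And>j. (j \<le> N - 1) = (j < N)" using N1 by auto
  show ?thesis unfolding covrel_def e using not_up_blk up_def by auto
qed


lemma N1: "N \<ge> 1" using N_ge by simp

lemma elems_eq: "elems \<alpha> = {1..N}" by (simp add: elems_def)

lemma covrel_elems: "(c, d) \<in> covrel \<alpha> \<Longrightarrow> c \<in> {1..N} \<and> d \<in> {1..N}"
  unfolding covrel_iff by auto

lemma covrel_neq: "(c, d) \<in> covrel \<alpha> \<Longrightarrow> c \<noteq> d"
  unfolding covrel_iff by auto

lemma ideal_iff: "I \<in> ideals \<alpha> \<longleftrightarrow> I \<subseteq> {1..N} \<and> (\<forall>c d. (c, d) \<in> covrel \<alpha> \<longrightarrow> d \<in> I \<longrightarrow> c \<in> I)"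
proof
  assume "I \<in> ideals \<alpha>"
  then show "I \<subseteq> {1..N} \<and> (\<forall>c d. (c, d) \<in> covrel \<alpha> \<longrightarrow> d \<in> I \<longrightarrow> c \<in> I)"
    unfolding ideals_def elems_eq fle_def by auto
next
  assume a: "I \<subseteq> {1..N} \<and> (\<forall>c d. (c, d) \<in> covrel \<alpha> \<longrightarrow> d \<in> I \<longrightarrow> c \<in> I)"
  have "y \<in> I" if "x \<in> I" "(y, x) \<in> (covrel \<alpha>)\<^sup>*" for x y
    using that(2,1)
  proof (induction rule: converse_rtrancl_induct)
    case base then show ?case .
  next
    case (step y z) then show ?case using a by blast
  qed
  then show "I \<in> ideals \<alpha>" using a unfolding ideals_def elems_eq fle_def by auto
qed

lemma ideal_sub: "I \<in> ideals \<alpha> \<Longrightarrow> I \<subseteq> {1..N}"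
  using ideal_iff by blast

lemma ideal_down: "I \<in> ideals \<alpha> \<Longrightarrow> (c, d) \<in> covrel \<alpha> \<Longrightarrow> d \<in> I \<Longrightarrow> c \<in> I"
  using ideal_iff by blast

lemma toggle_local:
  assumes I: "I \<in> ideals \<alpha>" and q: "q \<in> {1..N}"
  shows "toggle \<alpha> q I = (if q \<in> I \<and> (\<forall>d. (q, d) \<in> covrel \<alpha> \<longrightarrow> d \<notin> I) then I - {q}
      else if q \<notin> I \<and> (\<forall>c. (c, q) \<in> covrel \<alpha> \<longrightarrow> c \<in> I) then insert q I else I)"
proof -
  have c1: "(q \<in> I \<and> (\<forall>r\<in>I. \<not> fless \<alpha> q r)) \<longleftrightarrow> (q \<in> I \<and> (\<forall>d. (q, d) \<in> covrel \<alpha> \<longrightarrow> d \<notin> I))"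
  proof (intro iffI conjI allI impI ballI; (elim conjE)?)
    fix d assume "q \<in> I" "\<forall>r\<in>I. \<not> fless \<alpha> q r" "(q, d) \<in> covrel \<alpha>"
    then show "d \<notin> I" unfolding fless_def fle_def using covrel_neq by blast
  next
    fix r assume qI: "q \<in> I" and nd: "\<forall>d. (q, d) \<in> covrel \<alpha> \<longrightarrow> d \<notin> I" and rI: "r \<in> I"
    show "\<not> fless \<alpha> q r"
    proof
      assume "fless \<alpha> q r"
      then have "(q, r) \<in> (covrel \<alpha>)\<^sup>*" "q \<noteq> r" unfolding fless_def fle_def by auto
      then obtain d where "(q, d) \<in> covrel \<alpha>" "(d, r) \<in> (covrel \<alpha>)\<^sup>*"
        by (metis converse_rtranclE)
      then have "d \<in> I" using I rI unfolding ideals_def fle_def by blast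
      then show False using nd \<open>(q, d) \<in> covrel \<alpha>\<close> by blast
    qed
  qed auto
  have c2: "(q \<in> elems \<alpha> - I \<and> (\<forall>r\<in>elems \<alpha> - I. \<not> fless \<alpha> r q)) \<longleftrightarrow> (q \<notin> I \<and> (\<forall>c. (c, q) \<in> covrel \<alpha> \<longrightarrow> c \<in> I))"
  proof (intro iffI conjI allI impI ballI; (elim conjE)?)
    fix c assume "q \<in> elems \<alpha> - I" "\<forall>r\<in>elems \<alpha> - I. \<not> fless \<alpha> r q" "(c, q) \<in> covrel \<alpha>"
    then show "c \<in> I" unfolding fless_def fle_def elems_eq using covrel_neq covrel_elems by blast
  next
    fix r assume qI: "q \<notin> I" and nd: "\<forall>c. (c, q) \<in> covrel \<alpha> \<longrightarrow> c \<in> I" and rI: "r \<in> elems \<alpha> - I"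
    show "\<not> fless \<alpha> r q"
    proof
      assume "fless \<alpha> r q"
      then have "(r, q) \<in> (covrel \<alpha>)\<^sup>*" "q \<noteq> r" unfolding fless_def fle_def by auto
      then obtain c where "(r, c) \<in> (covrel \<alpha>)\<^sup>*" "(c, q) \<in> covrel \<alpha>"
        by (metis rtranclE)
      then have "r \<in> I" using I nd unfolding ideals_def fle_def by blast
      then show False using rI by blast
    qed
  qed (use q elems_eq in auto)
  show ?thesis unfolding toggle_def c1 c2 by simp
qed

lemma toggle_ideal: "I \<in> ideals \<alpha> \<Longrightarrow> toggle \<alpha> q I \<in> ideals \<alpha>"
proof -
  assume I: "I \<in> ideals \<alpha>"
  show ?thesis
  proof (cases "q \<in> {1..N}")
    case False
    then have "toggle \<alpha> q I = I" using ideal_sub[OF I] unfolding toggle_def elems_eq by auto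
    then show ?thesis using I by simp
  next
    case q: True
    show ?thesis unfolding toggle_local[OF I q] using I q unfolding ideal_iff
      by (auto dest: covrel_elems)
  qed
qed

lemma toggle_invol: "I \<in> ideals \<alpha> \<Longrightarrow> toggle \<alpha> q (toggle \<alpha> q I) = I"
proof -
  assume I: "I \<in> ideals \<alpha>"
  show ?thesis
  proof (cases "q \<in> {1..N}")
    case False
    then have "toggle \<alpha> q I = I" using ideal_sub[OF I] unfolding toggle_def elems_eq by auto
    then show ?thesis by simp
  next
    case q: True
    have I': "toggle \<alpha> q I \<in> ideals \<alpha>" using toggle_ideal[OF I] .
    show ?thesis
      unfolding toggle_local[OF I' q] unfolding toggle_local[OF I q]
      using ideal_down[OF I] covrel_neq by auto
  qed
qed

lemma fold_ideal: "I \<in> ideals \<alpha> \<Longrightarrow> fold (toggle \<alpha>) qs I \<in> ideals \<alpha>"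
  by (induction qs arbitrary: I) (auto simp: toggle_ideal)

lemma fold_inj: "I \<in> ideals \<alpha> \<Longrightarrow> I' \<in> ideals \<alpha> \<Longrightarrow> fold (toggle \<alpha>) qs I = fold (toggle \<alpha>) qs I' \<Longrightarrow> I = I'"
proof (induction qs arbitrary: I I')
  case Nil then show ?case by simp
next
  case (Cons q qs)
  then have "toggle \<alpha> q I = toggle \<alpha> q I'" using toggle_ideal by auto
  then have "toggle \<alpha> q (toggle \<alpha> q I) = toggle \<alpha> q (toggle \<alpha> q I')" by simp
  then show ?case using toggle_invol Cons.prems by simp
qed

lemma pro_ideal: "I \<in> ideals \<alpha> \<Longrightarrow> pro \<alpha> I \<in> ideals \<alpha>"
  unfolding pro_def by (rule fold_ideal)

lemma pro_inj: "inj_on (pro \<alpha>) (ideals \<alpha>)"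
  unfolding pro_def inj_on_def using fold_inj by blast

lemma toggle_other: "y \<noteq> q \<Longrightarrow> y \<in> toggle \<alpha> q S \<longleftrightarrow> y \<in> S"
  unfolding toggle_def by auto

lemma fold_other: "y \<notin> set qs \<Longrightarrow> y \<in> fold (toggle \<alpha>) qs S \<longleftrightarrow> y \<in> S"
  by (induction qs arbitrary: S) (auto simp: toggle_other)

lemma LOC:
  assumes I: "I \<in> ideals \<alpha>" and x: "1 \<le> x" "x \<le> N"
  shows "x \<in> pro \<alpha> I \<longleftrightarrow>
    (if x \<in> I then (x < N \<and> up x \<and> x + 1 \<in> I) \<or> (1 < x \<and> \<not> up (x - 1) \<and> x - 1 \<in> pro \<alpha> I)
     else (1 < x \<and> up (x - 1) \<longrightarrow> x - 1 \<in> pro \<alpha> I) \<and> (x < N \<and> \<not> up x \<longrightarrow> x + 1 \<in> I))"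
proof -
  define S where "S = fold (toggle \<alpha>) [1..<x] I"
  have S: "S \<in> ideals \<alpha>" unfolding S_def using fold_ideal[OF I] .
  have spl: "[1..<N + 1] = [1..<x] @ x # [x + 1..<N + 1]"
  proof -
    have "[1..<N + 1] = [1..<x] @ [x..<x + (N + 1 - x)]" using upt_add_eq_append[of 1 x "N+1-x"] x by simp
    moreover have "x + (N + 1 - x) = N + 1" using x by simp
    moreover have "[x..<N+1] = x # [x+1..<N+1]" using x by (simp add: upt_conv_Cons)
    ultimately show ?thesis by simp
  qed
  have J: "pro \<alpha> I = fold (toggle \<alpha>) [x + 1..<N + 1] (toggle \<alpha> x S)"
    by (simp only: pro_def S_def spl fold_append fold_Cons comp_def)
  have Sx: "x \<in> pro \<alpha> I \<longleftrightarrow> x \<in> toggle \<alpha> x S" proof -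
    have "x \<notin> set [x+1..<N+1]" unfolding set_upt by simp
    from fold_other[OF this, of "toggle \<alpha> x S"] show ?thesis using J by simp
  qed
  have Slow: "y \<in> S \<longleftrightarrow> y \<in> pro \<alpha> I" if "y < x" for y
    unfolding J using fold_other[of y "[x+1..<N+1]" "toggle \<alpha> x S"] toggle_other[of y x S] that unfolding set_upt by auto
  have Shigh: "y \<in> S \<longleftrightarrow> y \<in> I" if "y \<ge> x" for y
    unfolding S_def using fold_other[of y "[1..<x]" I] that unfolding set_upt by auto
  have xS: "x \<in> S \<longleftrightarrow> x \<in> I" using Shigh by simp
  have S1: "(x + 1 \<in> S) = (x + 1 \<in> I)" using Shigh by simp
  have S2: "x > 1 \<Longrightarrow> (x - 1 \<in> S) = (x - 1 \<in> pro \<alpha> I)" using Slow by simp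
  have e1: "(\<forall>d. (x, d) \<in> covrel \<alpha> \<longrightarrow> d \<notin> S) \<longleftrightarrow>
     \<not> ((x < N \<and> up x \<and> x + 1 \<in> S) \<or> (1 < x \<and> \<not> up (x - 1) \<and> x - 1 \<in> S))"
    unfolding covrel_iff using x by (cases x) auto
  have e2: "(\<forall>c. (c, x) \<in> covrel \<alpha> \<longrightarrow> c \<in> S) \<longleftrightarrow>
     ((1 < x \<and> up (x - 1) \<longrightarrow> x - 1 \<in> S) \<and> (x < N \<and> \<not> up x \<longrightarrow> x + 1 \<in> S))"
    unfolding covrel_iff using x by (cases x) auto
  have xr: "x \<in> {1..N}" using x by simp
  show ?thesis
  proof (cases "x \<in> I")
    case True
    then have "x \<in> S" using xS by simp
    then have "x \<in> toggle \<alpha> x S \<longleftrightarrow> \<not> (\<forall>d. (x, d) \<in> covrel \<alpha> \<longrightarrow> d \<notin> S)"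
      unfolding toggle_local[OF S xr] by simp
    then show ?thesis unfolding Sx e1 using True S1 S2 by auto
  next
    case False
    then have "x \<notin> S" using xS by simp
    then have "x \<in> toggle \<alpha> x S \<longleftrightarrow> (\<forall>c. (c, x) \<in> covrel \<alpha> \<longrightarrow> c \<in> S)"
      unfolding toggle_local[OF S xr] by simp
    then show ?thesis unfolding Sx e2 using False S1 S2 by auto
  qed
qed


lemma ideals_finite: "finite (ideals \<alpha>)"
proof -
  have "ideals \<alpha> \<subseteq> Pow {1..N}" using ideal_sub by blast
  then show ?thesis by (rule finite_subset) simp
qed

lemma funpow_ideal: "x \<in> ideals \<alpha> \<Longrightarrow> (pro \<alpha> ^^ k) x \<in> ideals \<alpha>"
  by (induction k) (auto simp: pro_ideal)

lemma cob_homomesic: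
  assumes cob: "\<forall>I\<in>ideals \<alpha>. f I - C = h (pro \<alpha> I) - h I"
  shows "homomesic (ideals \<alpha>) (pro \<alpha>) f"
  unfolding homomesic_def
proof (intro exI ballI)
  fix x assume x: "x \<in> ideals \<alpha>"
  define Ob where "Ob = orbit (pro \<alpha>) x"
  have Osub: "Ob \<subseteq> ideals \<alpha>" unfolding Ob_def orbit_def using funpow_ideal[OF x] by auto
  have fin: "finite Ob" using Osub ideals_finite finite_subset by blast
  have xO: "x \<in> Ob" unfolding Ob_def orbit_def by (auto intro: exI[of _ 0])
  have img: "pro \<alpha> ` Ob \<subseteq> Ob"
  proof
    fix z assume "z \<in> pro \<alpha> ` Ob"
    then obtain k where "z = pro \<alpha> ((pro \<alpha> ^^ k) x)" unfolding Ob_def orbit_def by auto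
    then have "z = (pro \<alpha> ^^ Suc k) x" by simp
    then show "z \<in> Ob" unfolding Ob_def orbit_def by blast
  qed
  have inj: "inj_on (pro \<alpha>) Ob" using pro_inj Osub inj_on_subset by blast
  have eq: "pro \<alpha> ` Ob = Ob" using endo_inj_surj[OF fin img inj] .
  have "(\<Sum>y\<in>Ob. h (pro \<alpha> y)) = (\<Sum>y\<in>pro \<alpha> ` Ob. h y)"
    using sum.reindex[OF inj, of h] by simp
  also have "\<dots> = (\<Sum>y\<in>Ob. h y)" using eq by simp
  finally have hs: "(\<Sum>y\<in>Ob. h (pro \<alpha> y)) = (\<Sum>y\<in>Ob. h y)" .
  have "(\<Sum>y\<in>Ob. f y) = (\<Sum>y\<in>Ob. C + (h (pro \<alpha> y) - h y))"
  proof (intro sum.cong refl)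
    fix y assume "y \<in> Ob"
    then have "f y - C = h (pro \<alpha> y) - h y" using cob Osub by blast
    then show "f y = C + (h (pro \<alpha> y) - h y)" by simp
  qed
  also have "\<dots> = real (card Ob) * C + ((\<Sum>y\<in>Ob. h (pro \<alpha> y)) - (\<Sum>y\<in>Ob. h y))"
    by (simp add: sum.distrib sum_subtractf)
  also have "\<dots> = real (card Ob) * C" using hs by simp
  finally have "(\<Sum>y\<in>Ob. f y) = real (card Ob) * C" .
  moreover have "card Ob > 0" using fin xO card_gt_0_iff by blast
  ultimately show "(\<Sum>y\<in>orbit (pro \<alpha>) x. f y) / real (card (orbit (pro \<alpha>) x)) = C"
    unfolding Ob_def[symmetric] by simp
qed


lemma interval_init:
  fixes S :: "nat set"
  assumes sub: "S \<subseteq> {L..R}" and dc: "\<And>x y. y \<in> S \<Longrightarrow> L \<le> x \<Longrightarrow> x \<le> y \<Longrightarrow> x \<in> S"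
  shows "S = {L..<L + card S}"
proof (cases "S = {}")
  case True then show ?thesis by simp
next
  case False
  have fin: "finite S" using sub finite_subset by blast
  define M where "M = Max S"
  have MS: "M \<in> S" unfolding M_def using fin False by simp
  have Mge: "\<And>x. x \<in> S \<Longrightarrow> x \<le> M" unfolding M_def using fin by simp
  have LM: "L \<le> M" using MS sub by auto
  have "S = {L..M}"
  proof
    show "S \<subseteq> {L..M}" using sub Mge by auto
    show "{L..M} \<subseteq> S" using dc MS by auto
  qed
  then show ?thesis using LM by auto
qed

lemma interval_final:
  fixes S :: "nat set"
  assumes sub: "S \<subseteq> {L..R}" and dc: "\<And>x y. y \<in> S \<Longrightarrow> y \<le> x \<Longrightarrow> x \<le> R \<Longrightarrow> x \<in> S"
  shows "S = {R + 1 - card S..R}"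
proof (cases "S = {}")
  case True
  then show ?thesis by simp
next
  case False
  have fin: "finite S" using sub finite_subset by blast
  define M where "M = Min S"
  have MS: "M \<in> S" unfolding M_def using fin False by simp
  have Mle: "\<And>x. x \<in> S \<Longrightarrow> M \<le> x" unfolding M_def using fin by simp
  have LM: "M \<le> R" using MS sub by auto
  have "S = {M..R}"
  proof
    show "S \<subseteq> {M..R}" using sub Mle by auto
    show "{M..R} \<subseteq> S" using dc MS by auto
  qed
  then show ?thesis using LM by auto
qed

context
  fixes L R :: nat
  assumes LR: "1 \<le> L" "L < R" "R \<le> N"
begin

definition X :: "nat set \<Rightarrow> nat" where "X K = card (K \<inter> {L..R})"

lemma X_le: "X K \<le> R - L + 1"
proof -
  have "card (K \<inter> {L..R}) \<le> card {L..R}" by (rule card_mono) auto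
  then show ?thesis unfolding X_def by simp
qed

lemma inc_mem:
  assumes K: "K \<in> ideals \<alpha>" and hup: "\<And>x. L \<le> x \<Longrightarrow> x < R \<Longrightarrow> up x"
    and x: "L \<le> x" "x \<le> R"
  shows "x \<in> K \<longleftrightarrow> x < L + X K"
proof -
  have dc: "x \<in> K" if "y \<in> K" "L \<le> x" "x \<le> y" "y \<le> R" for x y
    using that
  proof (induction "y - x" arbitrary: y)
    case 0 then show ?case by simp
  next
    case (Suc d)
    have xy: "x < y" using Suc.hyps(2) by arith
    have u: "up (y - 1)" using hup[of "y - 1"] Suc.prems xy by auto
    have "(y - 1, y) \<in> covrel \<alpha>" unfolding covrel_iff using Suc.prems xy u LR by auto
    then have "y - 1 \<in> K" using ideal_down[OF K] Suc.prems by blast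
    then show ?case using Suc.prems Suc.hyps(2) xy by (intro Suc.hyps(1)[of "y - 1"]) auto
  qed
  have "K \<inter> {L..R} = {L..<L + card (K \<inter> {L..R})}"
    by (rule interval_init) (auto intro: dc)
  then have "x \<in> K \<inter> {L..R} \<longleftrightarrow> x \<in> {L..<L + X K}" unfolding X_def by simp
  then show ?thesis using x by auto
qed

lemma dec_mem:
  assumes K: "K \<in> ideals \<alpha>" and hdn: "\<And>x. L \<le> x \<Longrightarrow> x < R \<Longrightarrow> \<not> up x"
    and x: "L \<le> x" "x \<le> R"
  shows "x \<in> K \<longleftrightarrow> R < x + X K"
proof -
  have dc: "x \<in> K" if "y \<in> K" "y \<le> x" "x \<le> R" "L \<le> y" for x y
    using that
  proof (induction "x - y" arbitrary: x)
    case 0 then show ?case by simp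
  next
    case (Suc d)
    have xy: "y < x" using Suc.hyps(2) by arith
    have u: "\<not> up (x - 1)" using hdn[of "x - 1"] Suc.prems xy by auto
    have "(x, x - 1) \<in> covrel \<alpha>" unfolding covrel_iff using Suc.prems xy u LR by auto
    moreover have "x - 1 \<in> K" using Suc.prems Suc.hyps(2) xy by (intro Suc.hyps(1)[of "x - 1"]) auto
    ultimately show ?case using ideal_down[OF K] by blast
  qed
  have "K \<inter> {L..R} = {R + 1 - card (K \<inter> {L..R})..R}"
    by (rule interval_final) (auto intro: dc)
  then have "x \<in> K \<inter> {L..R} \<longleftrightarrow> x \<in> {R + 1 - X K..R}" unfolding X_def by simp
  then show ?thesis using x X_le[of K] by auto
qed


lemma X_det_inc:
  assumes K: "K \<in> ideals \<alpha>" and hup: "\<And>x. L \<le> x \<Longrightarrow> x < R \<Longrightarrow> up x"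
    and k: "k \<le> R - L + 1" and a1: "k \<ge> 1 \<Longrightarrow> L + k - 1 \<in> K" and a2: "k \<le> R - L \<Longrightarrow> L + k \<notin> K"
  shows "X K = k"
proof -
  have m: "\<And>x. L \<le> x \<Longrightarrow> x \<le> R \<Longrightarrow> x \<in> K \<longleftrightarrow> x < L + X K"
    using inc_mem[OF K hup] by blast
  have "k \<le> X K"
  proof (cases "k \<ge> 1")
    case True
    then have "L + k - 1 < L + X K" using a1 m[of "L + k - 1"] k LR by auto
    then show ?thesis by arith
  qed auto
  moreover have "X K \<le> k"
  proof (cases "k \<le> R - L")
    case True then show ?thesis using a2 m[of "L + k"] LR by auto
  next
    case False then show ?thesis using X_le[of K] k by auto
  qed
  ultimately show ?thesis by simp
qed

lemma X_det_dec:
  assumes K: "K \<in> ideals \<alpha>" and hdn: "\<And>x. L \<le> x \<Longrightarrow> x < R \<Longrightarrow> \<not> up x"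
    and k: "k \<le> R - L + 1" and a1: "k \<ge> 1 \<Longrightarrow> R + 1 - k \<in> K" and a2: "k \<le> R - L \<Longrightarrow> R - k \<notin> K"
  shows "X K = k"
proof -
  have m: "\<And>x. L \<le> x \<Longrightarrow> x \<le> R \<Longrightarrow> x \<in> K \<longleftrightarrow> R < x + X K"
    using dec_mem[OF K hdn] by blast
  have "k \<le> X K"
  proof (cases "k \<ge> 1")
    case True
    then have "R < R + 1 - k + X K" using a1 m[of "R + 1 - k"] k LR by auto
    then show ?thesis using k by arith
  qed auto
  moreover have "X K \<le> k"
  proof (cases "k \<le> R - L")
    case True then show ?thesis using a2 m[of "R - k"] LR by auto
  next
    case False then show ?thesis using X_le[of K] k by auto
  qed
  ultimately show ?thesis by simp
qed

lemma inc_trans: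
  assumes I: "I \<in> ideals \<alpha>" and hup: "\<And>x. L \<le> x \<Longrightarrow> x < R \<Longrightarrow> up x"
    and hL: "L = 1 \<or> \<not> up (L - 1)" and hR: "R = N \<or> \<not> up R"
  shows "(2 \<le> X I \<longrightarrow> X (pro \<alpha> I) = X I - 1) \<and>
         (X I = 1 \<longrightarrow> (if 1 < L \<and> L - 1 \<in> pro \<alpha> I
             then X (pro \<alpha> I) = (if R < N \<and> R + 1 \<notin> I then R - L else R - L + 1)
             else X (pro \<alpha> I) = 0)) \<and>
         (X I = 0 \<longrightarrow> X (pro \<alpha> I) = (if R < N \<and> R + 1 \<notin> I then R - L else R - L + 1))"
proof -
  define J where "J = pro \<alpha> I"
  define H where "H = X I"
  have J: "J \<in> ideals \<alpha>" unfolding J_def using pro_ideal[OF I] .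
  have mI: "\<And>x. L \<le> x \<Longrightarrow> x \<le> R \<Longrightarrow> x \<in> I \<longleftrightarrow> x < L + H"
    unfolding H_def using inc_mem[OF I hup] by blast
  have HR: "H \<le> R - L + 1" unfolding H_def by (rule X_le)
  have loc: "\<And>x. 1 \<le> x \<Longrightarrow> x \<le> N \<Longrightarrow> x \<in> J \<longleftrightarrow>
    (if x \<in> I then (x < N \<and> up x \<and> x + 1 \<in> I) \<or> (1 < x \<and> \<not> up (x - 1) \<and> x - 1 \<in> J)
     else (1 < x \<and> up (x - 1) \<longrightarrow> x - 1 \<in> J) \<and> (x < N \<and> \<not> up x \<longrightarrow> x + 1 \<in> I))"
    unfolding J_def using LOC[OF I] by blast
  have c1: "X J = H - 1" if H2: "2 \<le> H"
  proof -
    define q where "q = L + H - 1"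
    have q: "L + 1 \<le> q" "q \<le> R" using H2 HR LR unfolding q_def by auto
    have qI: "q \<in> I" using mI[of q] q unfolding q_def by auto
    have q1I: "q - 1 \<in> I" using mI[of "q - 1"] q unfolding q_def by auto
    have upq1: "up (q - 1)" using hup[of "q - 1"] q by auto
    have "\<not> (q < N \<and> up q \<and> q + 1 \<in> I)"
    proof
      assume a: "q < N \<and> up q \<and> q + 1 \<in> I"
      show False
      proof (cases "q < R")
        case True then show False using a mI[of "q + 1"] q unfolding q_def by auto
      next
        case False then have "q = R" using q by simp
        then show False using a hR by auto
      qed
    qed
    then have qJ: "q \<notin> J" using loc[of q] qI upq1 q LR by auto
    have q1J: "q - 1 \<in> J" using loc[of "q - 1"] q1I qI upq1 q LR by auto
    show ?thesis
      by (rule X_det_inc[OF J hup]) (use HR H2 qJ q1J q_def in auto)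
  qed
  have casc: "X J = (if R < N \<and> R + 1 \<notin> I then R - L else R - L + 1)" if H1: "H \<le> 1" and LJ: "L \<in> J"
  proof -
    have all: "x \<in> J" if "L \<le> x" "x < R" for x
      using that
    proof (induction x rule: nat_induct_at_least)
      case base then show ?case using LJ by simp
    next
      case (Suc x)
      have "Suc x \<notin> I" using mI[of "Suc x"] Suc.prems Suc.hyps H1 by auto
      moreover have "up (Suc x)" using hup Suc.prems Suc.hyps by auto
      moreover have "x \<in> J" using Suc by auto
      ultimately show ?case using loc[of "Suc x"] Suc.prems LR by auto
    qed
    have RI: "R \<notin> I" using mI[of R] H1 LR by auto
    have R1J: "R - 1 \<in> J" using all[of "R - 1"] LR by auto
    have upR1: "up (R - 1)" using hup[of "R - 1"] LR by auto
    have RJ: "R \<in> J \<longleftrightarrow> \<not> (R < N \<and> R + 1 \<notin> I)"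
      using loc[of R] RI R1J upR1 hR LR by auto
    show ?thesis
    proof (cases "R < N \<and> R + 1 \<notin> I")
      case True
      then show ?thesis using RJ R1J LR by (intro X_det_inc[OF J hup]) auto
    next
      case False
      then show ?thesis using RJ LR by (intro X_det_inc[OF J hup]) auto
    qed
  qed
  have c0: "L \<in> J" if "H = 0"
  proof -
    have "L \<notin> I" using mI[of L] that LR by auto
    moreover have "up L" using hup LR by auto
    ultimately show ?thesis using loc[of L] hL LR by auto
  qed
  have c1L: "L \<in> J \<longleftrightarrow> 1 < L \<and> L - 1 \<in> J" if "H = 1"
  proof -
    have "L \<in> I" using mI[of L] that LR by auto
    moreover have "L + 1 \<notin> I" using mI[of "L + 1"] that LR by auto
    moreover have "up L" using hup LR by auto
    ultimately show ?thesis using loc[of L] hL LR by auto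
  qed
  have c1z: "X J = 0" if "L \<notin> J"
    using that by (intro X_det_inc[OF J hup]) auto
  show ?thesis
    unfolding J_def[symmetric] H_def[symmetric]
    using c1 casc c0 c1L c1z by auto
qed


lemma dec_trans:
  assumes I: "I \<in> ideals \<alpha>" and hdn: "\<And>x. L \<le> x \<Longrightarrow> x < R \<Longrightarrow> \<not> up x"
    and L1: "1 < L" and hL: "up (L - 1)" and hR: "R = N \<or> up R"
  shows "(X I + 1 \<le> R - L \<longrightarrow> X (pro \<alpha> I) = X I + 1) \<and>
         (X I = R - L \<longrightarrow> (if L - 1 \<in> pro \<alpha> I then X (pro \<alpha> I) = R - L + 1
             else X (pro \<alpha> I) = (if R < N \<and> R + 1 \<in> I then 1 else 0))) \<and>
         (X I = R - L + 1 \<longrightarrow> X (pro \<alpha> I) = (if R < N \<and> R + 1 \<in> I then 1 else 0))"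
proof -
  define J where "J = pro \<alpha> I"
  define H where "H = X I"
  have J: "J \<in> ideals \<alpha>" unfolding J_def using pro_ideal[OF I] .
  have mI: "\<And>x. L \<le> x \<Longrightarrow> x \<le> R \<Longrightarrow> x \<in> I \<longleftrightarrow> R < x + H"
    unfolding H_def using dec_mem[OF I hdn] by blast
  have HR: "H \<le> R - L + 1" unfolding H_def by (rule X_le)
  have loc: "\<And>x. 1 \<le> x \<Longrightarrow> x \<le> N \<Longrightarrow> x \<in> J \<longleftrightarrow>
    (if x \<in> I then (x < N \<and> up x \<and> x + 1 \<in> I) \<or> (1 < x \<and> \<not> up (x - 1) \<and> x - 1 \<in> J)
     else (1 < x \<and> up (x - 1) \<longrightarrow> x - 1 \<in> J) \<and> (x < N \<and> \<not> up x \<longrightarrow> x + 1 \<in> I))"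
    unfolding J_def using LOC[OF I] by blast
  have c1: "X J = H + 1" if H1: "H + 1 \<le> R - L"
  proof -
    define q where "q = R - H"
    have q: "L + 1 \<le> q" "q \<le> R" using H1 LR unfolding q_def by auto
    have qI: "q \<notin> I" using mI[of q] q unfolding q_def by auto
    have nup1: "\<not> up (q - 1)" using hdn[of "q - 1"] q by auto
    have "q + 1 \<in> I" if "q < R" using mI[of "q + 1"] q that unfolding q_def by auto
    then have qJ: "q \<in> J" using loc[of q] qI nup1 q LR hR by (cases "q < R") auto
    have q'I: "q - 1 \<notin> I" using mI[of "q - 1"] q unfolding q_def by auto
    have q'J: "q - 1 \<notin> J" using loc[of "q - 1"] q'I qI nup1 q LR by auto
    show ?thesis
      by (rule X_det_dec[OF J hdn]) (use H1 qJ q'J q_def LR in auto)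
  qed
  have casc: "X J = (if R < N \<and> R + 1 \<in> I then 1 else 0)" if Hm: "R - L \<le> H" and LJ: "L \<notin> J"
  proof -
    have all: "x \<notin> J" if "L \<le> x" "x < R" for x
      using that
    proof (induction x rule: nat_induct_at_least)
      case base then show ?case using LJ by simp
    next
      case (Suc x)
      have "Suc x \<in> I" using mI[of "Suc x"] Suc.prems Suc.hyps Hm by auto
      moreover have "\<not> up (Suc x)" using hdn Suc.prems Suc.hyps by auto
      moreover have "x \<notin> J" using Suc by auto
      ultimately show ?case using loc[of "Suc x"] Suc.prems LR by auto
    qed
    have RI: "R \<in> I" using mI[of R] Hm LR by auto
    have R1J: "R - 1 \<notin> J" using all[of "R - 1"] LR by auto
    have RJ: "R \<in> J \<longleftrightarrow> R < N \<and> R + 1 \<in> I"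
      using loc[of R] RI R1J hR LR by auto
    show ?thesis
    proof (cases "R < N \<and> R + 1 \<in> I")
      case True
      then show ?thesis using RJ R1J LR by (intro X_det_dec[OF J hdn]) auto
    next
      case False
      then show ?thesis using RJ LR by (intro X_det_dec[OF J hdn]) auto
    qed
  qed
  have cm: "L \<in> J \<longleftrightarrow> L - 1 \<in> J" if "H = R - L"
  proof -
    have "L \<notin> I" using mI[of L] that LR by auto
    moreover have "L + 1 \<in> I" using mI[of "L + 1"] that LR by auto
    ultimately show ?thesis using loc[of L] hL L1 LR by auto
  qed
  have cmJ: "X J = R - L + 1" if "L \<in> J"
    using that LR by (intro X_det_dec[OF J hdn]) auto
  have cm1: "L \<notin> J" if "H = R - L + 1"
  proof -
    have "L \<in> I" using mI[of L] that LR by auto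
    moreover have "\<not> up L" using hdn LR by auto
    ultimately show ?thesis using loc[of L] hL L1 LR by auto
  qed
  show ?thesis
    unfolding J_def[symmetric] H_def[symmetric]
    using c1 casc cm cmJ cm1 by auto
qed

end

end


context fence
begin

lemma fa_le_iff: "k \<le> T \<Longrightarrow> i \<le> T \<Longrightarrow> fa \<alpha> k \<le> fa \<alpha> i \<longleftrightarrow> k \<le> i"
  using fa_strict[of i k] fa_mono[of k i] by (cases "k \<le> i") auto

lemma fa_diff: "1 \<le> i \<Longrightarrow> i \<le> T \<Longrightarrow> fa \<alpha> i = fa \<alpha> (i - 1) + \<alpha> ! (i - 1)"
  using fa_Suc[of "i - 1"] by simp

lemma up_in_block: "1 \<le> i \<Longrightarrow> i \<le> T \<Longrightarrow> fa \<alpha> (i - 1) \<le> x \<Longrightarrow> x < fa \<alpha> i \<Longrightarrow> up x \<longleftrightarrow> odd i"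
  by (rule up_blk) (simp add: inblock_def)

lemma seg_first: "seg \<alpha> 1 = {1..fa \<alpha> 1}" by (simp add: seg_def)

lemma seg_last: "seg \<alpha> T = {fa \<alpha> (T - 1)..N}" using len2 by (simp add: seg_def)

lemma seg_mid: "1 < i \<Longrightarrow> i < T \<Longrightarrow> seg \<alpha> i = {fa \<alpha> (i - 1)..fa \<alpha> i}" by (simp add: seg_def)

lemma shared_in_seg:
  assumes i: "1 \<le> i" "i \<le> T"
  shows "p \<in> seg \<alpha> i \<inter> shared \<alpha> \<longleftrightarrow> (\<exists>k. 1 \<le> k \<and> k \<le> T - 1 \<and> (k = i - 1 \<or> k = i) \<and> p = fa \<alpha> k)"
proof
  assume "p \<in> seg \<alpha> i \<inter> shared \<alpha>"
  then obtain k where k: "1 \<le> k" "k \<le> T - 1" "p = fa \<alpha> k" and ps: "p \<in> seg \<alpha> i"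
    unfolding shared_def by auto
  have "k = i - 1 \<or> k = i"
  proof (cases "i = 1")
    case True
    then have "fa \<alpha> k \<le> fa \<alpha> 1" using ps k seg_first by auto
    then have "k \<le> 1" using fa_le_iff[of k 1] k len2 by auto
    then show ?thesis using k True by auto
  next
    case i1: False
    show ?thesis
    proof (cases "i = T")
      case True
      then have "fa \<alpha> (T - 1) \<le> fa \<alpha> k" using ps k seg_last by auto
      then have "T - 1 \<le> k" using fa_le_iff[of "T - 1" k] k by auto
      then show ?thesis using k True by auto
    next
      case False
      then have "fa \<alpha> (i - 1) \<le> fa \<alpha> k" "fa \<alpha> k \<le> fa \<alpha> i" using ps k seg_mid[of i] i i1 by auto
      then have "i - 1 \<le> k" "k \<le> i" using fa_le_iff[of "i - 1" k] fa_le_iff[of k i] k i by auto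
      then show ?thesis by auto
    qed
  qed
  then show "\<exists>k. 1 \<le> k \<and> k \<le> T - 1 \<and> (k = i - 1 \<or> k = i) \<and> p = fa \<alpha> k" using k by blast
next
  assume "\<exists>k. 1 \<le> k \<and> k \<le> T - 1 \<and> (k = i - 1 \<or> k = i) \<and> p = fa \<alpha> k"
  then obtain k where k: "1 \<le> k" "k \<le> T - 1" "k = i - 1 \<or> k = i" "p = fa \<alpha> k" by blast
  have sh: "p \<in> shared \<alpha>" unfolding shared_def using k by auto
  have "p \<in> seg \<alpha> i"
  proof (cases "i = 1")
    case True
    then have "k = 1" using k by auto
    then show ?thesis using True seg_first k fa_ge2[of 1] len2 by auto
  next
    case i1: False
    show ?thesis
    proof (cases "i = T")
      case True
      then have "k = T - 1" using k by auto
      then show ?thesis using True seg_last k N_ge by auto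
    next
      case False
      then show ?thesis using seg_mid[of i] i i1 k fa_mono[of "i - 1" i] by auto
    qed
  qed
  then show "p \<in> seg \<alpha> i \<inter> shared \<alpha>" using sh by blast
qed

lemma lowers: "2 \<le> q \<Longrightarrow> q + 1 \<le> N \<Longrightarrow>
  {c. (c, q) \<in> covrel \<alpha>} = (if up (q - 1) then {q - 1} else {}) \<union> (if up q then {} else {q + 1})"
  unfolding covrel_iff by (cases q) auto

lemma uppers: "2 \<le> q \<Longrightarrow> q + 1 \<le> N \<Longrightarrow>
  {d. (q, d) \<in> covrel \<alpha>} = (if up q then {q + 1} else {}) \<union> (if up (q - 1) then {} else {q - 1})"
  unfolding covrel_iff by (cases q) auto

lemma is_peak_iff: "2 \<le> q \<Longrightarrow> q + 1 \<le> N \<Longrightarrow> is_peak \<alpha> q \<longleftrightarrow> up (q - 1) \<and> \<not> up q"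
  unfolding is_peak_def using lowers[of q] by auto

lemma is_valley_iff: "2 \<le> q \<Longrightarrow> q + 1 \<le> N \<Longrightarrow> is_valley \<alpha> q \<longleftrightarrow> up q \<and> \<not> up (q - 1)"
  unfolding is_valley_def using uppers[of q] by auto

lemma up_fa: "1 \<le> k \<Longrightarrow> k \<le> T - 1 \<Longrightarrow> up (fa \<alpha> k - 1) \<longleftrightarrow> odd k"
proof -
  assume k: "1 \<le> k" "k \<le> T - 1"
  have "fa \<alpha> (k - 1) < fa \<alpha> k" using fa_strict[of "k - 1" k] k by auto
  then show ?thesis using up_in_block[of k "fa \<alpha> k - 1"] k by auto
qed

lemma up_fa2: "1 \<le> k \<Longrightarrow> k \<le> T - 1 \<Longrightarrow> up (fa \<alpha> k) \<longleftrightarrow> even k"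
proof -
  assume k: "1 \<le> k" "k \<le> T - 1"
  have "fa \<alpha> k < fa \<alpha> (k + 1)" using fa_strict[of k "k + 1"] k by auto
  then show ?thesis using up_in_block[of "k + 1" "fa \<alpha> k"] k by auto
qed

lemma peak_fa: "1 \<le> k \<Longrightarrow> k \<le> T - 1 \<Longrightarrow> is_peak \<alpha> (fa \<alpha> k) \<longleftrightarrow> odd k"
  using is_peak_iff[of "fa \<alpha> k"] shared_range[of k] up_fa up_fa2 by auto

lemma valley_fa: "1 \<le> k \<Longrightarrow> k \<le> T - 1 \<Longrightarrow> is_valley \<alpha> (fa \<alpha> k) \<longleftrightarrow> even k"
  using is_valley_iff[of "fa \<alpha> k"] shared_range[of k] up_fa up_fa2 by auto

lemma peak_char: "1 \<le> i \<Longrightarrow> i \<le> T \<Longrightarrow> (p \<in> seg \<alpha> i \<inter> shared \<alpha> \<and> is_peak \<alpha> p) \<longleftrightarrow>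
   (\<exists>k. 1 \<le> k \<and> k \<le> T - 1 \<and> (k = i - 1 \<or> k = i) \<and> odd k \<and> p = fa \<alpha> k)"
  using shared_in_seg[of i p] peak_fa by auto

lemma valley_char: "1 \<le> i \<Longrightarrow> i \<le> T \<Longrightarrow> (p \<in> seg \<alpha> i \<inter> shared \<alpha> \<and> is_valley \<alpha> p) \<longleftrightarrow>
   (\<exists>k. 1 \<le> k \<and> k \<le> T - 1 \<and> (k = i - 1 \<or> k = i) \<and> even k \<and> p = fa \<alpha> k)"
  using shared_in_seg[of i p] valley_fa by auto

lemma chi_peak_some:
  assumes i: "1 \<le> i" "i \<le> T" and k: "1 \<le> k" "k \<le> T - 1" "k = i - 1 \<or> k = i" "odd k"
  shows "chi_peak \<alpha> i I = chi (fa \<alpha> k) I"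
proof -
  have ex: "\<exists>p. p \<in> seg \<alpha> i \<inter> shared \<alpha> \<and> is_peak \<alpha> p" using peak_char[OF i] k by blast
  have "(THE p. p \<in> seg \<alpha> i \<inter> shared \<alpha> \<and> is_peak \<alpha> p) = fa \<alpha> k"
  proof (rule the_equality)
    show "fa \<alpha> k \<in> seg \<alpha> i \<inter> shared \<alpha> \<and> is_peak \<alpha> (fa \<alpha> k)" using peak_char[OF i] k by blast
  next
    fix p assume "p \<in> seg \<alpha> i \<inter> shared \<alpha> \<and> is_peak \<alpha> p"
    then obtain k' where "1 \<le> k'" "k' \<le> T - 1" "k' = i - 1 \<or> k' = i" "odd k'" "p = fa \<alpha> k'"
      using peak_char[OF i] by blast
    then have "k' = k" using k by presburger
    then show "p = fa \<alpha> k" using \<open>p = fa \<alpha> k'\<close> by simp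
  qed
  then show ?thesis unfolding chi_peak_def using ex by simp
qed

lemma chi_peak_none:
  assumes i: "1 \<le> i" "i \<le> T" and nk: "\<And>k. 1 \<le> k \<Longrightarrow> k \<le> T - 1 \<Longrightarrow> k = i - 1 \<or> k = i \<Longrightarrow> even k"
  shows "chi_peak \<alpha> i I = 0"
proof -
  have "\<not> (\<exists>p. p \<in> seg \<alpha> i \<inter> shared \<alpha> \<and> is_peak \<alpha> p)" using peak_char[OF i] nk by blast
  then show ?thesis unfolding chi_peak_def by (rule if_not_P)
qed

lemma chi_valley_some:
  assumes i: "1 \<le> i" "i \<le> T" and k: "1 \<le> k" "k \<le> T - 1" "k = i - 1 \<or> k = i" "even k"
  shows "chi_valley \<alpha> i I = chi (fa \<alpha> k) I"
proof -
  have ex: "\<exists>p. p \<in> seg \<alpha> i \<inter> shared \<alpha> \<and> is_valley \<alpha> p" using valley_char[OF i] k by blast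
  have "(THE p. p \<in> seg \<alpha> i \<inter> shared \<alpha> \<and> is_valley \<alpha> p) = fa \<alpha> k"
  proof (rule the_equality)
    show "fa \<alpha> k \<in> seg \<alpha> i \<inter> shared \<alpha> \<and> is_valley \<alpha> (fa \<alpha> k)" using valley_char[OF i] k by blast
  next
    fix p assume "p \<in> seg \<alpha> i \<inter> shared \<alpha> \<and> is_valley \<alpha> p"
    then obtain k' where "1 \<le> k'" "k' \<le> T - 1" "k' = i - 1 \<or> k' = i" "even k'" "p = fa \<alpha> k'"
      using valley_char[OF i] by blast
    then have "k' = k" using k by presburger
    then show "p = fa \<alpha> k" using \<open>p = fa \<alpha> k'\<close> by simp
  qed
  then show ?thesis unfolding chi_valley_def using ex by simp
qed

lemma chi_valley_none:
  assumes i: "1 \<le> i" "i \<le> T" and nk: "\<And>k. 1 \<le> k \<Longrightarrow> k \<le> T - 1 \<Longrightarrow> k = i - 1 \<or> k = i \<Longrightarrow> odd k"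
  shows "chi_valley \<alpha> i I = 0"
proof -
  have "\<not> (\<exists>p. p \<in> seg \<alpha> i \<inter> shared \<alpha> \<and> is_valley \<alpha> p)" using valley_char[OF i] nk by blast
  then show ?thesis unfolding chi_valley_def by (rule if_not_P)
qed

lemma fa_shared: "1 \<le> k \<Longrightarrow> k \<le> T - 1 \<Longrightarrow> fa \<alpha> k \<in> shared \<alpha>"
  unfolding shared_def by auto

lemma bseg_first: "bseg \<alpha> 1 = {1..fa \<alpha> 1 - 1}"
proof -
  have "x \<in> bseg \<alpha> 1 \<longleftrightarrow> x \<in> {1..fa \<alpha> 1} \<and> x \<noteq> fa \<alpha> 1" for x
    using shared_in_seg[of 1 x] len2 seg_first fa_shared[of 1] unfolding bseg_def by auto
  then show ?thesis
  proof (intro set_eqI)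
    fix x assume h: "\<And>x. x \<in> bseg \<alpha> 1 \<longleftrightarrow> x \<in> {1..fa \<alpha> 1} \<and> x \<noteq> fa \<alpha> 1"
    show "x \<in> bseg \<alpha> 1 \<longleftrightarrow> x \<in> {1..fa \<alpha> 1 - 1}" unfolding h[of x] by auto
  qed
qed

lemma bseg_mid: "1 < i \<Longrightarrow> i < T \<Longrightarrow> bseg \<alpha> i = {fa \<alpha> (i - 1) + 1..fa \<alpha> i - 1}"
proof -
  assume i: "1 < i" "i < T"
  have "fa \<alpha> (i - 1) \<in> shared \<alpha>" "fa \<alpha> i \<in> shared \<alpha>" using fa_shared[of "i - 1"] fa_shared[of i] i by auto
  have "x \<in> bseg \<alpha> i \<longleftrightarrow> x \<in> {fa \<alpha> (i - 1)..fa \<alpha> i} \<and> x \<noteq> fa \<alpha> (i - 1) \<and> x \<noteq> fa \<alpha> i" for x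
    using shared_in_seg[of i x] i seg_mid[of i] \<open>fa \<alpha> (i - 1) \<in> shared \<alpha>\<close> \<open>fa \<alpha> i \<in> shared \<alpha>\<close> unfolding bseg_def by auto
  then show ?thesis
  proof (intro set_eqI)
    fix x assume h: "\<And>x. x \<in> bseg \<alpha> i \<longleftrightarrow> x \<in> {fa \<alpha> (i - 1)..fa \<alpha> i} \<and> x \<noteq> fa \<alpha> (i - 1) \<and> x \<noteq> fa \<alpha> i"
    show "x \<in> bseg \<alpha> i \<longleftrightarrow> x \<in> {fa \<alpha> (i - 1) + 1..fa \<alpha> i - 1}" unfolding h[of x] by auto
  qed
qed

lemma bseg_last: "bseg \<alpha> T = {fa \<alpha> (T - 1) + 1..N}"
proof -
  have sh: "fa \<alpha> (T - 1) \<in> shared \<alpha>" using fa_shared[of "T - 1"] len2 by auto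
  have "x \<in> bseg \<alpha> T \<longleftrightarrow> x \<in> {fa \<alpha> (T - 1)..N} \<and> x \<noteq> fa \<alpha> (T - 1)" for x
    using shared_in_seg[of T x] len2 seg_last sh unfolding bseg_def by auto
  then show ?thesis
  proof (intro set_eqI)
    fix x assume h: "\<And>x. x \<in> bseg \<alpha> T \<longleftrightarrow> x \<in> {fa \<alpha> (T - 1)..N} \<and> x \<noteq> fa \<alpha> (T - 1)"
    show "x \<in> bseg \<alpha> T \<longleftrightarrow> x \<in> {fa \<alpha> (T - 1) + 1..N}" unfolding h[of x] by auto
  qed
qed


primrec phi :: "nat \<Rightarrow> int" where
  "phi 0 = 0"
| "phi (Suc j) = (if up j then phi j + 1 else phi j - 1)"

lemma phi_cov: "(c, d) \<in> covrel \<alpha> \<Longrightarrow> phi d = phi c + 1"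
  unfolding covrel_iff by auto

lemma phi_rtrancl: "(r, s) \<in> (covrel \<alpha>)\<^sup>* \<Longrightarrow> r = s \<or> phi r < phi s"
proof (induction rule: rtrancl_induct)
  case base then show ?case by simp
next
  case (step y z) then show ?case using phi_cov[of y z] by auto
qed

lemma phi_inc: assumes hup: "\<And>x. L \<le> x \<Longrightarrow> x < R \<Longrightarrow> up x" and y: "L \<le> y" "y \<le> R"
  shows "phi y = phi L + int (y - L)"
  using y hup proof (induction y rule: nat_induct_at_least)
  case base then show ?case by simp
next
  case (Suc y) then show ?case by (auto simp: Suc_diff_le)
qed

lemma phi_dec: assumes hdn: "\<And>x. L \<le> x \<Longrightarrow> x < R \<Longrightarrow> \<not> up x" and y: "L \<le> y" "y \<le> R"
  shows "phi y = phi L - int (y - L)"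
  using y hdn proof (induction y rule: nat_induct_at_least)
  case base then show ?case by simp
next
  case (Suc y) then show ?case by (auto simp: Suc_diff_le)
qed

lemma path_inc:
  assumes hup: "\<And>x. L \<le> x \<Longrightarrow> x < R \<Longrightarrow> up x" and LR: "1 \<le> L" "R \<le> N"
    and rs: "L \<le> r" "r \<le> s" "s \<le> R"
  shows "(r, s) \<in> (covrel \<alpha>)\<^sup>*"
  using rs(2,1,3) proof (induction s rule: nat_induct_at_least)
  case base then show ?case by simp
next
  case (Suc s)
  have "(s, Suc s) \<in> covrel \<alpha>" unfolding covrel_iff using hup[of s] Suc LR by auto
  then show ?case using Suc by (meson rtrancl.rtrancl_into_rtrancl Suc_leD)
qed

lemma path_dec:
  assumes hdn: "\<And>x. L \<le> x \<Longrightarrow> x < R \<Longrightarrow> \<not> up x" and LR: "1 \<le> L" "R \<le> N"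
    and rs: "L \<le> s" "s \<le> r" "r \<le> R"
  shows "(r, s) \<in> (covrel \<alpha>)\<^sup>*"
  using rs(2,1,3) proof (induction r rule: nat_induct_at_least)
  case base then show ?case by simp
next
  case (Suc r)
  have "(Suc r, r) \<in> covrel \<alpha>" unfolding covrel_iff using hdn[of r] Suc LR by auto
  then show ?case using Suc by (meson converse_rtrancl_into_rtrancl Suc_leD)
qed

lemma fless_inc:
  assumes hup: "\<And>x. L \<le> x \<Longrightarrow> x < R \<Longrightarrow> up x" and LR: "1 \<le> L" "R \<le> N"
    and r: "L \<le> r" "r \<le> R" and s: "L \<le> s" "s \<le> R"
  shows "fless \<alpha> r s \<longleftrightarrow> r < s"
proof
  assume "fless \<alpha> r s"
  then have "r \<noteq> s" "phi r < phi s" using phi_rtrancl unfolding fless_def fle_def by auto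
  then show "r < s" using phi_inc[of L R r, OF hup] phi_inc[of L R s, OF hup] r s by auto
next
  assume "r < s"
  then show "fless \<alpha> r s" unfolding fless_def fle_def using path_inc[OF hup LR, of r s] r s by auto
qed

lemma fless_dec:
  assumes hdn: "\<And>x. L \<le> x \<Longrightarrow> x < R \<Longrightarrow> \<not> up x" and LR: "1 \<le> L" "R \<le> N"
    and r: "L \<le> r" "r \<le> R" and s: "L \<le> s" "s \<le> R"
  shows "fless \<alpha> r s \<longleftrightarrow> s < r"
proof
  assume "fless \<alpha> r s"
  then have "r \<noteq> s" "phi r < phi s" using phi_rtrancl unfolding fless_def fle_def by auto
  then show "s < r" using phi_dec[of L R r, OF hdn] phi_dec[of L R s, OF hdn] r s by auto
next
  assume "s < r"
  then show "fless \<alpha> r s" unfolding fless_def fle_def using path_dec[OF hdn LR, of s r] r s by auto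
qed

lemma sij_inc:
  assumes hup: "\<And>x. L \<le> x \<Longrightarrow> x < R \<Longrightarrow> up x" and LR: "1 \<le> L" "R \<le> N"
    and B: "bseg \<alpha> i = {B0..B1}" "L \<le> B0" "B1 \<le> R" and j: "1 \<le> j" "j \<le> B1 + 1 - B0"
  shows "sij \<alpha> i j = B0 + j - 1"
  unfolding sij_def
proof (rule the_equality)
  have cnt: "card {r \<in> bseg \<alpha> i. fless \<alpha> r s} = s - B0" if s: "s \<in> {B0..B1}" for s
  proof -
    have "{r \<in> bseg \<alpha> i. fless \<alpha> r s} = {B0..<s}"
      unfolding B(1) using fless_inc[OF hup LR] s B by auto
    then show ?thesis by simp
  qed
  have s0: "B0 + j - 1 \<in> {B0..B1}" using j by auto
  show "B0 + j - 1 \<in> bseg \<alpha> i \<and> card {r \<in> bseg \<alpha> i. fless \<alpha> r (B0 + j - 1)} = j - 1"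
    using cnt[OF s0] s0 B(1) j by auto
  fix s assume "s \<in> bseg \<alpha> i \<and> card {r \<in> bseg \<alpha> i. fless \<alpha> r s} = j - 1"
  then show "s = B0 + j - 1" using cnt[of s] j B by auto
qed

lemma sij_dec:
  assumes hdn: "\<And>x. L \<le> x \<Longrightarrow> x < R \<Longrightarrow> \<not> up x" and LR: "1 \<le> L" "R \<le> N"
    and B: "bseg \<alpha> i = {B0..B1}" "L \<le> B0" "B1 \<le> R" and j: "1 \<le> j" "j \<le> B1 + 1 - B0"
  shows "sij \<alpha> i j = B1 + 1 - j"
  unfolding sij_def
proof (rule the_equality)
  have cnt: "card {r \<in> bseg \<alpha> i. fless \<alpha> r s} = B1 - s" if s: "s \<in> {B0..B1}" for s
  proof -
    have "{r \<in> bseg \<alpha> i. fless \<alpha> r s} = {s<..B1}"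
      unfolding B(1) using fless_dec[OF hdn LR] s B by auto
    then show ?thesis by simp
  qed
  have s0: "B1 + 1 - j \<in> {B0..B1}" using j by auto
  show "B1 + 1 - j \<in> bseg \<alpha> i \<and> card {r \<in> bseg \<alpha> i. fless \<alpha> r (B1 + 1 - j)} = j - 1"
    using cnt[OF s0] s0 B(1) j by auto
  fix s assume "s \<in> bseg \<alpha> i \<and> card {r \<in> bseg \<alpha> i. fless \<alpha> r s} = j - 1"
  then show "s = B1 + 1 - j" using cnt[of s] j B by auto
qed

end


context fence
begin

lemma cob_from_X:
  assumes "\<forall>I\<in>ideals \<alpha>. gen \<alpha> i j I = G (X L R I)"
    and "\<forall>I\<in>ideals \<alpha>. G (X L R I) - C = h' (X L R (pro \<alpha> I)) - h' (X L R I)"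
  shows "\<exists>C h. \<forall>I\<in>ideals \<alpha>. gen \<alpha> i j I - C = h (pro \<alpha> I) - h I"
  using assms by (intro exI[of _ C] exI[of _ "\<lambda>I. h' (X L R I)"]) auto

lemma chi_iff: "chi q I = (if q \<in> I then 1 else 0)" by (simp add: chi_def)

lemma kind1:
  assumes j: "1 \<le> j" "j \<le> \<alpha> ! 0 - 1"
  shows "\<exists>C h. \<forall>I\<in>ideals \<alpha>. gen \<alpha> 1 j I - C = h (pro \<alpha> I) - h I"
proof -
  define A where "A = \<alpha> ! 0"
  define R where "R = fa \<alpha> 1"
  have RA: "R = A" unfolding R_def A_def using fa1 .
  have T1: "1 \<le> T - 1" using len2 by simp
  have LR: "1 \<le> (1::nat)" "1 < R" "R \<le> N" using shared_range[OF _ T1] unfolding R_def by auto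
  have hup: "\<And>x. 1 \<le> x \<Longrightarrow> x < R \<Longrightarrow> up x" unfolding R_def using up_in_block[of 1] len2 by auto
  have hL: "1 = 1 \<or> \<not> up (1 - 1)" by simp
  have hR: "R = N \<or> \<not> up R" using up_fa2[of 1] T1 unfolding R_def by auto
  have jA: "1 \<le> j" "j + 1 \<le> A" using j unfolding A_def by auto
  have bs: "bseg \<alpha> 1 = {1..R - 1}" using bseg_first unfolding R_def .
  have sij: "sij \<alpha> 1 j = j"
    using sij_inc[OF hup LR(1) LR(3) bs, of j] j RA unfolding A_def by auto
  have pk: "chi_peak \<alpha> 1 I = chi R I" for I
    using chi_peak_some[of 1 1 I] len2 T1 unfolding R_def by auto
  have vl: "chi_valley \<alpha> 1 I = 0" for I
    using chi_valley_none[of 1 I] len2 by auto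
  have gen: "gen \<alpha> 1 j I = G1 A j (X 1 R I)" if I: "I \<in> ideals \<alpha>" for I
  proof -
    have m: "\<And>x. 1 \<le> x \<Longrightarrow> x \<le> R \<Longrightarrow> x \<in> I \<longleftrightarrow> x < 1 + X 1 R I"
      using inc_mem[OF LR I hup] by blast
    have Xle: "X 1 R I \<le> A" using X_le[OF LR, of I] RA jA by simp
    have c1: "j \<in> I \<longleftrightarrow> j \<le> X 1 R I" using m[of j] jA RA by auto
    have c2: "R \<in> I \<longleftrightarrow> X 1 R I = A" using m[of R] LR Xle RA by auto
    show ?thesis unfolding gen_def sij pk vl chi_iff G1_def using c1 c2 A_def by auto
  qed
  have tr: "G1 A j (X 1 R I) - (real A - real j) = h1 A j (X 1 R (pro \<alpha> I)) - h1 A j (X 1 R I)"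
    if I: "I \<in> ideals \<alpha>" for I
  proof -
    have t: "(2 \<le> X 1 R I \<longrightarrow> X 1 R (pro \<alpha> I) = X 1 R I - 1) \<and>
         (X 1 R I = 1 \<longrightarrow> X 1 R (pro \<alpha> I) = 0) \<and>
         (X 1 R I = 0 \<longrightarrow> X 1 R (pro \<alpha> I) = A - 1 \<or> X 1 R (pro \<alpha> I) = A)"
      using inc_trans[OF LR I hup hL hR] RA jA by (auto split: if_splits)
    have Xle: "X 1 R I \<le> A" using X_le[OF LR, of I] RA jA by simp
    show ?thesis
    proof (cases "X 1 R I = 0")
      case True then show ?thesis using t k1_wrap[OF jA] by auto
    next
      case False
      then have "X 1 R (pro \<alpha> I) = X 1 R I - 1" using t by (cases "X 1 R I = 1") auto
      then show ?thesis using k1_step[OF jA, of "X 1 R I"] False Xle by auto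
    qed
  qed
  show ?thesis
    by (rule cob_from_X[where G="G1 A j" and L=1 and R=R and C="real A - real j" and h'="h1 A j"]) (use gen tr in auto)
qed


lemma kind2:
  assumes i: "1 < i" "i < T" "odd i" and j: "1 \<le> j" "j \<le> \<alpha> ! (i - 1) - 1"
  shows "\<exists>C h. \<forall>I\<in>ideals \<alpha>. gen \<alpha> i j I - C = h (pro \<alpha> I) - h I"
proof -
  define A where "A = \<alpha> ! (i - 1)"
  define L where "L = fa \<alpha> (i - 1)"
  define R where "R = fa \<alpha> i"
  have RA: "R = L + A" unfolding R_def A_def L_def using fa_diff[of i] i by auto
  have i1: "1 \<le> i - 1" "i - 1 \<le> T - 1" "1 \<le> i" "i \<le> T - 1" using i by auto
  have sL: "2 \<le> L" using shared_range[OF i1(1,2)] unfolding L_def by auto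
  have sR: "R + 1 \<le> N" using shared_range[OF i1(3,4)] unfolding R_def by auto
  have A2: "2 \<le> A" using j unfolding A_def by auto
  have LR: "1 \<le> L" "L < R" "R \<le> N" using sL sR RA A2 by auto
  have hup: "\<And>x. L \<le> x \<Longrightarrow> x < R \<Longrightarrow> up x" unfolding R_def L_def using up_in_block[of i] i by auto
  have hL: "L = 1 \<or> \<not> up (L - 1)" using up_fa[of "i - 1"] i unfolding L_def by auto
  have hR: "R = N \<or> \<not> up R" using up_fa2[of i] i unfolding R_def by auto
  have jA: "1 \<le> j" "j + 1 \<le> A" using j unfolding A_def by auto
  have bs: "bseg \<alpha> i = {L + 1..R - 1}" using bseg_mid[of i] i unfolding R_def L_def by simp
  have sij: "sij \<alpha> i j = L + j"
    using sij_inc[OF hup LR(1) LR(3) bs, of j] j RA jA by auto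
  have pk: "chi_peak \<alpha> i I = chi R I" for I
    using chi_peak_some[of i i I] i unfolding R_def by auto
  have vl: "chi_valley \<alpha> i I = chi L I" for I
    using chi_valley_some[of i "i - 1" I] i unfolding L_def by auto
  have gen: "gen \<alpha> i j I = G2 A j (X L R I)" if I: "I \<in> ideals \<alpha>" for I
  proof -
    have m: "\<And>x. L \<le> x \<Longrightarrow> x \<le> R \<Longrightarrow> x \<in> I \<longleftrightarrow> x < L + X L R I"
      using inc_mem[OF LR I hup] by blast
    have Xle: "X L R I \<le> A + 1" using X_le[OF LR, of I] RA LR by simp
    have c1: "L + j \<in> I \<longleftrightarrow> j + 1 \<le> X L R I" using m[of "L + j"] jA RA by auto
    have c2: "R \<in> I \<longleftrightarrow> X L R I = A + 1" using m[of R] LR Xle RA by auto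
    have c3: "L \<in> I \<longleftrightarrow> 1 \<le> X L R I" using m[of L] LR by auto
    show ?thesis unfolding gen_def sij pk vl chi_iff G2_def using c1 c2 c3 A_def by auto
  qed
  have tr: "G2 A j (X L R I) = h2 A j (X L R (pro \<alpha> I)) - h2 A j (X L R I)"
    if I: "I \<in> ideals \<alpha>" for I
  proof -
    have t: "(2 \<le> X L R I \<longrightarrow> X L R (pro \<alpha> I) = X L R I - 1) \<and>
         (X L R I = 1 \<longrightarrow> X L R (pro \<alpha> I) = 0 \<or> X L R (pro \<alpha> I) = A \<or> X L R (pro \<alpha> I) = A + 1) \<and>
         (X L R I = 0 \<longrightarrow> X L R (pro \<alpha> I) = A \<or> X L R (pro \<alpha> I) = A + 1)"
      using inc_trans[OF LR I hup hL hR] RA jA by (auto split: if_splits)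
    have Xle: "X L R I \<le> A + 1" using X_le[OF LR, of I] RA LR by simp
    show ?thesis
    proof (cases "X L R I \<le> 1 \<and> X L R (pro \<alpha> I) \<noteq> 0")
      case True
      then have w2: "X L R (pro \<alpha> I) = A \<or> X L R (pro \<alpha> I) = A + 1" using t by auto
      have w1: "X L R I = 0 \<or> X L R I = 1" using True by auto
      show ?thesis by (rule k2_wrap[OF jA w1 w2])
    next
      case False
      then have "X L R (pro \<alpha> I) = X L R I - 1" "1 \<le> X L R I" using t jA by auto
      then show ?thesis using k2_step[OF jA, of "X L R I"] Xle by auto
    qed
  qed
  show ?thesis
    by (rule cob_from_X[where G="G2 A j" and L=L and R=R and C="0::real" and h'="h2 A j"]) (use gen tr in auto)
qed

lemma N_fa: "N + 1 = fa \<alpha> (T - 1) + \<alpha> ! (T - 1)"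
  using faT N_eq alphaT by simp

lemma kind3:
  assumes i: "odd T" and j: "1 \<le> j" "j \<le> \<alpha> ! (T - 1) - 1"
  shows "\<exists>C h. \<forall>I\<in>ideals \<alpha>. gen \<alpha> T j I - C = h (pro \<alpha> I) - h I"
proof -
  define A where "A = \<alpha> ! (T - 1)"
  define L where "L = fa \<alpha> (T - 1)"
  define R where "R = N"
  have RA: "R + 1 = L + A" unfolding R_def A_def L_def using N_fa .
  have T1: "1 \<le> T - 1" using len2 by simp
  have LR: "1 \<le> L" "L < R" "R \<le> N"
    using shared_range[OF T1] N_ge unfolding R_def L_def by auto
  have hup: "\<And>x. L \<le> x \<Longrightarrow> x < R \<Longrightarrow> up x" unfolding R_def L_def
    using up_in_block[of T] len2 i N_eq by auto
  have hL: "L = 1 \<or> \<not> up (L - 1)" using up_fa[of "T - 1"] T1 i len2 unfolding L_def by auto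
  have hR: "R = N \<or> \<not> up R" unfolding R_def by simp
  have jA: "1 \<le> j" "j + 1 \<le> A" using j alphaT unfolding A_def by auto
  have bs: "bseg \<alpha> T = {L + 1..R}" using bseg_last unfolding R_def L_def by simp
  have sij: "sij \<alpha> T j = L + j"
    using sij_inc[OF hup LR(1) LR(3) bs, of j] j RA jA by auto
  have ev: "even k" if "1 \<le> k" "k \<le> T - 1" "k = T - 1 \<or> k = T" for k
    using that i by presburger
  have pk: "chi_peak \<alpha> T I = 0" for I
    by (rule chi_peak_none[of T I]) (use len2 ev in auto)
  have vl: "chi_valley \<alpha> T I = chi L I" for I
    using chi_valley_some[of T "T - 1" I] i len2 T1 unfolding L_def by auto
  have gen: "gen \<alpha> T j I = G3 A j (X L R I)" if I: "I \<in> ideals \<alpha>" for I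
  proof -
    have m: "\<And>x. L \<le> x \<Longrightarrow> x \<le> R \<Longrightarrow> x \<in> I \<longleftrightarrow> x < L + X L R I"
      using inc_mem[OF LR I hup] by blast
    have c1: "L + j \<in> I \<longleftrightarrow> j + 1 \<le> X L R I" using m[of "L + j"] jA RA by auto
    have c3: "L \<in> I \<longleftrightarrow> 1 \<le> X L R I" using m[of L] LR by auto
    show ?thesis unfolding gen_def sij pk vl chi_iff G3_def using c1 c3 A_def by auto
  qed
  have tr: "G3 A j (X L R I) = h2 A j (X L R (pro \<alpha> I)) - h2 A j (X L R I)"
    if I: "I \<in> ideals \<alpha>" for I
  proof -
    have t: "(2 \<le> X L R I \<longrightarrow> X L R (pro \<alpha> I) = X L R I - 1) \<and>
         (X L R I = 1 \<longrightarrow> X L R (pro \<alpha> I) = 0 \<or> X L R (pro \<alpha> I) = A) \<and>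
         (X L R I = 0 \<longrightarrow> X L R (pro \<alpha> I) = A)"
      using inc_trans[OF LR I hup hL hR] RA jA unfolding R_def by (auto split: if_splits)
    have Xle: "X L R I \<le> A" using X_le[OF LR, of I] RA LR by simp
    show ?thesis
    proof (cases "X L R I \<le> 1 \<and> X L R (pro \<alpha> I) \<noteq> 0")
      case True
      then have w2: "X L R (pro \<alpha> I) = A" using t by auto
      have w1: "X L R I = 0 \<or> X L R I = 1" using True by auto
      show ?thesis using k3_wrap[OF jA w1] w2 by simp
    next
      case False
      then have "X L R (pro \<alpha> I) = X L R I - 1" "1 \<le> X L R I" using t jA by auto
      then show ?thesis using k3_step[OF jA, of "X L R I"] Xle by auto
    qed
  qed
  show ?thesis
    by (rule cob_from_X[where G="G3 A j" and L=L and R=R and C="0::real" and h'="h2 A j"]) (use gen tr in auto)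
qed

lemma kind4:
  assumes i: "1 < i" "i < T" "even i" and j: "1 \<le> j" "j \<le> \<alpha> ! (i - 1) - 1"
  shows "\<exists>C h. \<forall>I\<in>ideals \<alpha>. gen \<alpha> i j I - C = h (pro \<alpha> I) - h I"
proof -
  define A where "A = \<alpha> ! (i - 1)"
  define L where "L = fa \<alpha> (i - 1)"
  define R where "R = fa \<alpha> i"
  have RA: "R = L + A" unfolding R_def A_def L_def using fa_diff[of i] i by auto
  have i1: "1 \<le> i - 1" "i - 1 \<le> T - 1" "1 \<le> i" "i \<le> T - 1" using i by auto
  have sL: "2 \<le> L" using shared_range[OF i1(1,2)] unfolding L_def by auto
  have sR: "R + 1 \<le> N" using shared_range[OF i1(3,4)] unfolding R_def by auto
  have A2: "2 \<le> A" using j unfolding A_def by auto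
  have LR: "1 \<le> L" "L < R" "R \<le> N" using sL sR RA A2 by auto
  have L1: "1 < L" using sL by auto
  have hdn: "\<And>x. L \<le> x \<Longrightarrow> x < R \<Longrightarrow> \<not> up x" unfolding R_def L_def using up_in_block[of i] i by auto
  have hL: "up (L - 1)" using up_fa[of "i - 1"] i unfolding L_def by auto
  have hR: "R = N \<or> up R" using up_fa2[of i] i unfolding R_def by auto
  have jA: "1 \<le> j" "j + 1 \<le> A" using j unfolding A_def by auto
  have bs: "bseg \<alpha> i = {L + 1..R - 1}" using bseg_mid[of i] i unfolding R_def L_def by simp
  have sij: "sij \<alpha> i j = R - j"
    using sij_dec[OF hdn LR(1) LR(3) bs, of j] j RA jA by auto
  have pk: "chi_peak \<alpha> i I = chi L I" for I
    using chi_peak_some[of i "i - 1" I] i unfolding L_def by auto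
  have vl: "chi_valley \<alpha> i I = chi R I" for I
    using chi_valley_some[of i i I] i unfolding R_def by auto
  have gen: "gen \<alpha> i j I = G2 A j (X L R I)" if I: "I \<in> ideals \<alpha>" for I
  proof -
    have m: "\<And>x. L \<le> x \<Longrightarrow> x \<le> R \<Longrightarrow> x \<in> I \<longleftrightarrow> R < x + X L R I"
      using dec_mem[OF LR I hdn] by blast
    have Xle: "X L R I \<le> A + 1" using X_le[OF LR, of I] RA LR by simp
    have c1: "R - j \<in> I \<longleftrightarrow> j + 1 \<le> X L R I" using m[of "R - j"] jA RA by auto
    have c2: "L \<in> I \<longleftrightarrow> X L R I = A + 1" using m[of L] LR Xle RA by auto
    have c3: "R \<in> I \<longleftrightarrow> 1 \<le> X L R I" using m[of R] LR by auto
    show ?thesis unfolding gen_def sij pk vl chi_iff G2_def using c1 c2 c3 A_def by auto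
  qed
  have tr: "G2 A j (X L R I) = h4 A j (X L R (pro \<alpha> I)) - h4 A j (X L R I)"
    if I: "I \<in> ideals \<alpha>" for I
  proof -
    have t: "(X L R I + 1 \<le> A \<longrightarrow> X L R (pro \<alpha> I) = X L R I + 1) \<and>
         (X L R I = A \<longrightarrow> X L R (pro \<alpha> I) = A + 1 \<or> X L R (pro \<alpha> I) = 0 \<or> X L R (pro \<alpha> I) = 1) \<and>
         (X L R I = A + 1 \<longrightarrow> X L R (pro \<alpha> I) = 0 \<or> X L R (pro \<alpha> I) = 1)"
      using dec_trans[OF LR I hdn L1 hL hR] RA jA by (auto split: if_splits)
    have Xle: "X L R I \<le> A + 1" using X_le[OF LR, of I] RA LR by simp
    show ?thesis
    proof (cases "A \<le> X L R I \<and> X L R (pro \<alpha> I) \<noteq> A + 1")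
      case True
      then have w2: "X L R (pro \<alpha> I) = 0 \<or> X L R (pro \<alpha> I) = 1" and w1: "X L R I = A \<or> X L R I = A + 1"
        using t Xle by auto
      show ?thesis by (rule k4_wrap[OF jA w1 w2])
    next
      case False
      then have "X L R (pro \<alpha> I) = X L R I + 1" "X L R I \<le> A" using t Xle jA by auto
      then show ?thesis using k4_step[OF jA, of "X L R I"] by auto
    qed
  qed
  show ?thesis
    by (rule cob_from_X[where G="G2 A j" and L=L and R=R and C="0::real" and h'="h4 A j"]) (use gen tr in auto)
qed

lemma kind5:
  assumes i: "even T" and j: "1 \<le> j" "j \<le> \<alpha> ! (T - 1) - 1"
  shows "\<exists>C h. \<forall>I\<in>ideals \<alpha>. gen \<alpha> T j I - C = h (pro \<alpha> I) - h I"
proof -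
  define A where "A = \<alpha> ! (T - 1)"
  define L where "L = fa \<alpha> (T - 1)"
  define R where "R = N"
  have RA: "R + 1 = L + A" unfolding R_def A_def L_def using N_fa .
  have T1: "1 \<le> T - 1" using len2 by simp
  have LR: "1 \<le> L" "L < R" "R \<le> N"
    using shared_range[OF T1] N_ge unfolding R_def L_def by auto
  have L1: "1 < L" using shared_range[OF T1] unfolding L_def by auto
  have hdn: "\<And>x. L \<le> x \<Longrightarrow> x < R \<Longrightarrow> \<not> up x" unfolding R_def L_def
    using up_in_block[of T] len2 i N_eq by auto
  have hL: "up (L - 1)" using up_fa[of "T - 1"] T1 i len2 unfolding L_def by auto
  have hR: "R = N \<or> up R" unfolding R_def by simp
  have jA: "1 \<le> j" "j + 1 \<le> A" using j alphaT unfolding A_def by auto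
  have bs: "bseg \<alpha> T = {L + 1..R}" using bseg_last unfolding R_def L_def by simp
  have sij: "sij \<alpha> T j = R + 1 - j"
    using sij_dec[OF hdn LR(1) LR(3) bs, of j] j RA jA by auto
  have pk: "chi_peak \<alpha> T I = chi L I" for I
    using chi_peak_some[of T "T - 1" I] i len2 T1 ne unfolding L_def by auto
  have od: "odd k" if "1 \<le> k" "k \<le> T - 1" "k = T - 1 \<or> k = T" for k
    using that i by presburger
  have vl: "chi_valley \<alpha> T I = 0" for I
    by (rule chi_valley_none[of T I]) (use len2 od in auto)
  have gen: "gen \<alpha> T j I = G1 A j (X L R I)" if I: "I \<in> ideals \<alpha>" for I
  proof -
    have m: "\<And>x. L \<le> x \<Longrightarrow> x \<le> R \<Longrightarrow> x \<in> I \<longleftrightarrow> R < x + X L R I"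
      using dec_mem[OF LR I hdn] by blast
    have Xle: "X L R I \<le> A" using X_le[OF LR, of I] RA LR by simp
    have c1: "R + 1 - j \<in> I \<longleftrightarrow> j \<le> X L R I" using m[of "R + 1 - j"] jA RA by auto
    have c2: "L \<in> I \<longleftrightarrow> X L R I = A" using m[of L] LR Xle RA by auto
    show ?thesis unfolding gen_def sij pk vl chi_iff G1_def using c1 c2 A_def by auto
  qed
  have tr: "G1 A j (X L R I) - (real A - real j) = h5 A j (X L R (pro \<alpha> I)) - h5 A j (X L R I)"
    if I: "I \<in> ideals \<alpha>" for I
  proof -
    have t: "(X L R I + 1 \<le> A - 1 \<longrightarrow> X L R (pro \<alpha> I) = X L R I + 1) \<and>
         (X L R I = A - 1 \<longrightarrow> X L R (pro \<alpha> I) = A \<or> X L R (pro \<alpha> I) = 0) \<and>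
         (X L R I = A \<longrightarrow> X L R (pro \<alpha> I) = 0)"
      using dec_trans[OF LR I hdn L1 hL hR] RA jA unfolding R_def by (auto split: if_splits)
    have Xle: "X L R I \<le> A" using X_le[OF LR, of I] RA LR by simp
    show ?thesis
    proof (cases "A - 1 \<le> X L R I \<and> X L R (pro \<alpha> I) = 0")
      case True
      then have w1: "X L R I = A - 1 \<or> X L R I = A" using Xle by auto
      have w2: "X L R (pro \<alpha> I) = 0" using True by simp
      show ?thesis unfolding w2 by (rule k5_wrap[OF jA w1])
    next
      case False
      then have "X L R (pro \<alpha> I) = X L R I + 1" "X L R I + 1 \<le> A" using t Xle jA by auto
      then show ?thesis using k5_step[OF jA, of "X L R I"] by auto
    qed
  qed
  show ?thesis
    by (rule cob_from_X[where G="G1 A j" and L=L and R=R and C="real A - real j" and h'="h5 A j"]) (use gen tr in auto)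
qed

end


theorem theorem7p5:
  fixes \<alpha> :: "nat list" and c :: "nat \<Rightarrow> nat \<Rightarrow> real"
  assumes "length \<alpha> \<ge> 2"
    and "\<forall>x\<in>set \<alpha>. x > 0"
    and "hd \<alpha> \<ge> 2" and "last \<alpha> \<ge> 2"
  shows "homomesic (ideals \<alpha>) (pro \<alpha>)
           (\<lambda>I. \<Sum>i = 1..length \<alpha>. \<Sum>j = 1..\<alpha> ! (i - 1) - 1. c i j * gen \<alpha> i j I)"
proof -
  interpret fence \<alpha> using assms by unfold_locales auto
  have ex: "\<exists>p. \<forall>I\<in>ideals \<alpha>. gen \<alpha> i j I - fst p = snd p (pro \<alpha> I) - snd p I"
    if i: "i \<in> {1..length \<alpha>}" and j: "j \<in> {1..\<alpha> ! (i - 1) - 1}" for i j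
  proof -
    have "\<exists>C h. \<forall>I\<in>ideals \<alpha>. gen \<alpha> i j I - C = h (pro \<alpha> I) - h I"
    proof (cases "i = 1")
      case True
      then show ?thesis using kind1[of j] j by auto
    next
      case i1: False
      show ?thesis
      proof (cases "i = length \<alpha>")
        case True
        show ?thesis
        proof (cases "odd (length \<alpha>)")
          case o: True
          show ?thesis using kind3[OF o, of j] j True by auto
        next
          case e: False
          then have e': "even (length \<alpha>)" by simp
          show ?thesis using kind5[OF e', of j] j True by auto
        qed
      next
        case False
        then have ii: "1 < i" "i < length \<alpha>" using i i1 by auto
        show ?thesis
        proof (cases "odd i")
          case True
          then show ?thesis using kind2[OF ii True, of j] j by auto
        next
          case False
          then have ev: "even i" by simp
          show ?thesis using kind4[OF ii ev, of j] j by auto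
        qed
      qed
    qed
    then obtain C h where "\<forall>I\<in>ideals \<alpha>. gen \<alpha> i j I - C = h (pro \<alpha> I) - h I" by blast
    then show ?thesis by (intro exI[of _ "(C, h)"]) simp
  qed
  define p where "p i j = (SOME p. \<forall>I\<in>ideals \<alpha>. gen \<alpha> i j I - fst p = snd p (pro \<alpha> I) - snd p I)"
    for i j
  have pp: "\<forall>I\<in>ideals \<alpha>. gen \<alpha> i j I - fst (p i j) = snd (p i j) (pro \<alpha> I) - snd (p i j) I"
    if "i \<in> {1..length \<alpha>}" "j \<in> {1..\<alpha> ! (i - 1) - 1}" for i j
    unfolding p_def using someI_ex[OF ex[OF that]] .
  define C where "C = (\<Sum>i = 1..length \<alpha>. \<Sum>j = 1..\<alpha> ! (i - 1) - 1. c i j * fst (p i j))"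
  define h where "h I = (\<Sum>i = 1..length \<alpha>. \<Sum>j = 1..\<alpha> ! (i - 1) - 1. c i j * snd (p i j) I)" for I
  show ?thesis
  proof (rule cob_homomesic[where C=C and h=h], intro ballI)
    fix I assume I: "I \<in> ideals \<alpha>"
    have "(\<Sum>i = 1..length \<alpha>. \<Sum>j = 1..\<alpha> ! (i - 1) - 1. c i j * gen \<alpha> i j I) - C =
      (\<Sum>i = 1..length \<alpha>. \<Sum>j = 1..\<alpha> ! (i - 1) - 1. c i j * (gen \<alpha> i j I - fst (p i j)))"
      unfolding C_def by (simp add: sum_subtractf right_diff_distrib)
    also have "\<dots> = (\<Sum>i = 1..length \<alpha>. \<Sum>j = 1..\<alpha> ! (i - 1) - 1.
        c i j * (snd (p i j) (pro \<alpha> I) - snd (p i j) I))"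
      using pp I by (intro sum.cong refl) auto
    also have "\<dots> = h (pro \<alpha> I) - h I"
      unfolding h_def by (simp add: sum_subtractf right_diff_distrib)
    finally show "(\<Sum>i = 1..length \<alpha>. \<Sum>j = 1..\<alpha> ! (i - 1) - 1. c i j * gen \<alpha> i j I) - C =
        h (pro \<alpha> I) - h I" .
  qed
qed

end
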